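(* Let $h\ge 3$ and let $m$ be a positive integer with $\omega=\omega(m)\ge 2$, and let $\varpi=\varpi(m)$. Then there are $\mathrm{CC}^h[m]$-circuits of size $2^{O(n^{1/((\omega-1)(h-2)+(\varpi-1))}\log n)}$ computing the $n$-ary conjunction $\mathrm{AND}_n$.
   Context: For an integer $m\ge 1$ and $A\subseteq\{0,\dots,m-1\}$, a gate $\mathrm{MOD}_m^A$ takes finitely many Boolean inputs (counted with multiplicity) and outputs $1$ if their sum modulo $m$ lies in $A$, and $0$ otherwise. A $\mathrm{CC}^h[m]$-circuit is a depth-$h$ Boolean circuit all of whose gates are of the form $\mathrm{MOD}_m^A$ ($A$ may vary between gates), with Boolean variable inputs and multiple wires allowed. The size of a circuit is its number of gates. $\omega(m)$ is the number of distinct prime divisors of $m$ and $\varpi(m)$ is the number of prime divisors $p$ of $m$ with $p\ge\omega(m)$. *)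

theory Defs
  imports Complex_Main "HOL-Library.Multiset" "HOL-Computational_Algebra.Primes"
begin

definition omega :: "nat \<Rightarrow> nat" where
  "omega m = card (prime_factors m)"

definition varpi :: "nat \<Rightarrow> nat" where
  "varpi m = card {p \<in> prime_factors m. p \<ge> omega m}"

text \<open>A wire feeding a gate: either an input variable x_j or the output of an
  earlier gate (gates are listed in topological order).\<close>
datatype wire = Var nat | Gate nat

text \<open>A MOD_m^A gate: accepting set A and the multiset of its input wires
  (multiple wires allowed).\<close>
record modgate =
  acc :: "nat set"
  ins :: "wire multiset"

type_synonym circuit = "modgate list"

fun wire_val :: "(nat \<Rightarrow> bool) \<Rightarrow> bool list \<Rightarrow> wire \<Rightarrow> nat" where
  "wire_val x vs (Var j) = (if x j then 1 else 0)"
| "wire_val x vs (Gate k) = (if k < length vs \<and> vs ! k then 1 else 0)"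

definition gate_out :: "nat \<Rightarrow> (nat \<Rightarrow> bool) \<Rightarrow> bool list \<Rightarrow> modgate \<Rightarrow> bool" where
  "gate_out m x vs g = ((\<Sum>\<^sub># (image_mset (wire_val x vs) (ins g))) mod m \<in> acc g)"

definition circ_vals :: "nat \<Rightarrow> circuit \<Rightarrow> (nat \<Rightarrow> bool) \<Rightarrow> bool list" where
  "circ_vals m C x = foldl (\<lambda>vs g. vs @ [gate_out m x vs g]) [] C"

definition circ_eval :: "nat \<Rightarrow> circuit \<Rightarrow> (nat \<Rightarrow> bool) \<Rightarrow> bool" where
  "circ_eval m C x = last (circ_vals m C x)"

fun wire_depth :: "nat list \<Rightarrow> wire \<Rightarrow> nat" where
  "wire_depth ds (Var j) = 0"
| "wire_depth ds (Gate k) = (if k < length ds then ds ! k else 0)"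

definition gate_depth :: "nat list \<Rightarrow> modgate \<Rightarrow> nat" where
  "gate_depth ds g = Suc (Max (insert 0 (wire_depth ds ` set_mset (ins g))))"

definition circ_depths :: "circuit \<Rightarrow> nat list" where
  "circ_depths C = foldl (\<lambda>ds g. ds @ [gate_depth ds g]) [] C"

definition circ_depth :: "circuit \<Rightarrow> nat" where
  "circ_depth C = Max (insert 0 (set (circ_depths C)))"

definition wf_circuit :: "nat \<Rightarrow> nat \<Rightarrow> circuit \<Rightarrow> bool" where
  "wf_circuit m n C \<longleftrightarrow> C \<noteq> [] \<and>
     (\<forall>i < length C. acc (C ! i) \<subseteq> {..<m} \<and>
        (\<forall>w \<in># ins (C ! i). (\<forall>j. w = Var j \<longrightarrow> j < n) \<and> (\<forall>k. w = Gate k \<longrightarrow> k < i)))"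

text \<open>A CC^h[m]-circuit on n inputs: depth-h circuit of MOD_m^A gates
  (depth at most h; equivalent to exactly h by padding with identity gates).\<close>
definition CC_circuit :: "nat \<Rightarrow> nat \<Rightarrow> nat \<Rightarrow> circuit \<Rightarrow> bool" where
  "CC_circuit h m n C \<longleftrightarrow> wf_circuit m n C \<and> circ_depth C \<le> h"

definition circ_size :: "circuit \<Rightarrow> nat" where
  "circ_size C = length C"

definition computes_AND :: "nat \<Rightarrow> nat \<Rightarrow> circuit \<Rightarrow> bool" where
  "computes_AND m n C \<longleftrightarrow> (\<forall>x. circ_eval m C x = (\<forall>j<n. x j))"

end

theory Submission
  imports Defs "HOL-Library.FuncSet" "HOL-Number_Theory.Cong"
begin

datatype expr = V nat | G "nat set" "expr list"

fun ev :: "nat \<Rightarrow> (nat \<Rightarrow> bool) \<Rightarrow> expr \<Rightarrow> bool" where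
  "ev m x (V j) = x j"
| "ev m x (G A es) = ((\<Sum>e\<leftarrow>es. if ev m x e then 1 else 0) mod m \<in> A)"

fun dep :: "expr \<Rightarrow> nat" where
  "dep (V j) = 0"
| "dep (G A es) = Suc (foldr max (map dep es) 0)"

fun sz :: "expr \<Rightarrow> nat" where
  "sz (V j) = 0"
| "sz (G A es) = Suc (\<Sum>e\<leftarrow>es. sz e)"

fun vars :: "expr \<Rightarrow> nat set" where
  "vars (V j) = {j}"
| "vars (G A es) = \<Union> (set (map vars es))"

fun po :: "expr \<Rightarrow> expr list" where
  "po (V j) = []"
| "po (G A es) = concat (map po es) @ [G A es]"

fun isG :: "expr \<Rightarrow> bool" where
  "isG (V j) = False" | "isG (G A es) = True"

fun args :: "expr \<Rightarrow> expr list" where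
  "args (V j) = []" | "args (G A es) = es"

fun gacc :: "expr \<Rightarrow> nat set" where
  "gacc (V j) = {}" | "gacc (G A es) = A"

definition closedp :: "expr list \<Rightarrow> bool" where
  "closedp S \<longleftrightarrow> (\<forall>i < length S. isG (S ! i) \<and>
      (\<forall>c \<in> set (args (S ! i)). isG c \<longrightarrow> c \<in> set (take i S)))"

lemma closedp_Nil: "closedp []" by (simp add: closedp_def)

lemma closedp_append:
  assumes "closedp S1" "closedp S2" shows "closedp (S1 @ S2)"
  unfolding closedp_def
proof (intro allI impI)
  fix i assume i: "i < length (S1 @ S2)"
  show "isG ((S1 @ S2) ! i) \<and> (\<forall>c\<in>set (args ((S1 @ S2) ! i)). isG c \<longrightarrow> c \<in> set (take i (S1 @ S2)))"
  proof (cases "i < length S1")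
    case True
    then show ?thesis using assms(1) by (auto simp: closedp_def nth_append)
  next
    case False
    define k where "k = i - length S1"
    have k: "k < length S2" "i = length S1 + k" using i False by (auto simp: k_def)
    have "set (take k S2) \<subseteq> set (take i (S1 @ S2))" using k by auto
    then show ?thesis using assms(2) k by (auto simp: closedp_def nth_append)
  qed
qed

lemma closedp_concat: "(\<And>S. S \<in> set Ss \<Longrightarrow> closedp S) \<Longrightarrow> closedp (concat Ss)"
  by (induction Ss) (auto intro: closedp_append simp: closedp_Nil)

lemma closedp_snoc:
  assumes "closedp S" "isG g" "\<And>c. c \<in> set (args g) \<Longrightarrow> isG c \<Longrightarrow> c \<in> set S"
  shows "closedp (S @ [g])"
  unfolding closedp_def
proof (intro allI impI)
  fix i assume i: "i < length (S @ [g])"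
  show "isG ((S @ [g]) ! i) \<and> (\<forall>c\<in>set (args ((S @ [g]) ! i)). isG c \<longrightarrow> c \<in> set (take i (S @ [g])))"
  proof (cases "i < length S")
    case True
    then show ?thesis using assms(1) by (auto simp: closedp_def nth_append)
  next
    case False
    then have "i = length S" using i by auto
    then show ?thesis using assms by (auto simp: nth_append)
  qed
qed

lemma po_last: "isG e \<Longrightarrow> po e \<noteq> [] \<and> last (po e) = e"
  by (cases e) auto

lemma po_in: "isG e \<Longrightarrow> e \<in> set (po e)"
  using po_last by (metis last_in_set)

lemma po_closed: "closedp (po e)"
proof (induction e)
  case (V x)
  then show ?case by (simp add: closedp_Nil)
next
  case (G A es)
  have c1: "closedp (concat (map po es))"
    by (rule closedp_concat) (use G in auto)
  show ?case
    apply simp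
    apply (rule closedp_snoc[OF c1])
    using po_in by fastforce+
qed

lemma po_sub: "g \<in> set (po e) \<Longrightarrow> dep g \<le> dep e \<and> vars g \<subseteq> vars e \<and> sz g \<le> sz e"
proof (induction e arbitrary: g)
  case (V x)
  then show ?case by simp
next
  case (G A es)
  show ?case
  proof (cases "g = G A es")
    case True then show ?thesis by simp
  next
    case False
    then obtain c where c: "c \<in> set es" "g \<in> set (po c)" using G.prems by auto
    have "dep c \<le> foldr max (map dep es) 0"
      using c(1) by (induction es) auto
    moreover have "sz c \<le> (\<Sum>e\<leftarrow>es. sz e)"
      using c(1) by (simp add: member_le_sum_list)
    ultimately show ?thesis using G.IH[OF c] c by fastforce
  qed
qed

lemma po_length: "length (po e) = sz e"
  by (induction e) (auto simp: length_concat comp_def intro!: arg_cong[where f=sum_list])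

definition wire :: "expr list \<Rightarrow> expr \<Rightarrow> wire" where
  "wire S c = (case c of V j \<Rightarrow> Var j | G A es \<Rightarrow> Gate (LEAST k. S ! k = c))"

definition cgate :: "nat \<Rightarrow> expr list \<Rightarrow> expr \<Rightarrow> modgate" where
  "cgate m S g = \<lparr>acc = gacc g \<inter> {..<m}, ins = mset (map (wire S) (args g))\<rparr>"

definition cmpl :: "nat \<Rightarrow> expr \<Rightarrow> circuit" where
  "cmpl m e = map (cgate m (po e)) (po e)"

lemma circ_vals_snoc: "circ_vals m (C @ [g]) x = circ_vals m C x @ [gate_out m x (circ_vals m C x) g]"
  by (simp add: circ_vals_def)

lemma circ_vals_len: "length (circ_vals m C x) = length C"
  by (induction C rule: rev_induct) (auto simp: circ_vals_snoc, simp add: circ_vals_def)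

lemma circ_vals_nth: "i < length C \<Longrightarrow> circ_vals m C x ! i = gate_out m x (take i (circ_vals m C x)) (C ! i)"
proof (induction C arbitrary: i rule: rev_induct)
  case Nil then show ?case by simp
next
  case (snoc g C)
  show ?case
  proof (cases "i < length C")
    case True
    then show ?thesis using snoc circ_vals_len[of m C x]
      by (simp add: circ_vals_snoc nth_append)
  next
    case False
    then have "i = length C" using snoc by simp
    then show ?thesis using circ_vals_len[of m C x] by (simp add: circ_vals_snoc nth_append)
  qed
qed

lemma circ_depths_snoc: "circ_depths (C @ [g]) = circ_depths C @ [gate_depth (circ_depths C) g]"
  by (simp add: circ_depths_def)

lemma circ_depths_len: "length (circ_depths C) = length C"
  by (induction C rule: rev_induct) (auto simp: circ_depths_snoc, simp add: circ_depths_def)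

lemma circ_depths_nth: "i < length C \<Longrightarrow> circ_depths C ! i = gate_depth (take i (circ_depths C)) (C ! i)"
proof (induction C arbitrary: i rule: rev_induct)
  case Nil then show ?case by simp
next
  case (snoc g C)
  show ?case
  proof (cases "i < length C")
    case True
    then show ?thesis using snoc circ_depths_len[of C]
      by (simp add: circ_depths_snoc nth_append)
  next
    case False
    then have "i = length C" using snoc by simp
    then show ?thesis using circ_depths_len[of C] by (simp add: circ_depths_snoc nth_append)
  qed
qed

lemma least_idx:
  assumes "closedp S" "i < length S" "c \<in> set (args (S ! i))" "isG c"
  shows "(LEAST k. S ! k = c) < i \<and> S ! (LEAST k. S ! k = c) = c"
proof -
  have "c \<in> set (take i S)" using assms unfolding closedp_def by blast
  then obtain k where k: "k < length (take i S)" "take i S ! k = c" by (metis in_set_conv_nth)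
  then have k2: "k < i" "S ! k = c" by auto
  have "(LEAST k. S ! k = c) \<le> k" using k2 by (intro Least_le) 
  moreover have "S ! (LEAST k. S ! k = c) = c" using k2 by (intro LeastI)
  ultimately show ?thesis using k2 by simp
qed

lemma comp_vals:
  assumes "m > 0"
  shows "i < length (po e) \<Longrightarrow> circ_vals m (cmpl m e) x ! i = ev m x (po e ! i)"
proof (induction i rule: less_induct)
  case (less i)
  define S where "S = po e"
  define vs where "vs = circ_vals m (cmpl m e) x"
  have cl: "closedp S" using po_closed S_def by simp
  have lenvs: "length vs = length S" by (simp add: vs_def S_def circ_vals_len cmpl_def)
  have iS: "i < length S" using less S_def by simp
  obtain A es where g: "S ! i = G A es" using cl iS unfolding closedp_def by (cases "S ! i") auto
  have wv: "wire_val x (take i vs) (wire S c) = (if ev m x c then 1 else 0)" if c: "c \<in> set es" for c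
  proof (cases c)
    case (V j) then show ?thesis by (simp add: wire_def)
  next
    case (G A' es')
    then have cG: "isG c" by simp
    have L: "(LEAST k. S ! k = c) < i" "S ! (LEAST k. S ! k = c) = c"
      using least_idx[OF cl iS _ cG] c g by auto
    have "vs ! (LEAST k. S ! k = c) = ev m x c"
      using less.IH[of "(LEAST k. S ! k = c)"] L iS unfolding vs_def S_def by simp
    then show ?thesis using L G lenvs iS by (simp add: wire_def)
  qed
  have "vs ! i = gate_out m x (take i vs) (cgate m S (S ! i))"
    unfolding vs_def using circ_vals_nth[of i "cmpl m e" m x] iS by (simp add: cmpl_def S_def)
  also have "\<dots> = ((\<Sum>c\<leftarrow>es. if ev m x c then 1 else 0) mod m \<in> A)"
  proof -
    have "(\<Sum>\<^sub># (image_mset (wire_val x (take i vs)) (mset (map (wire S) es))))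
          = (\<Sum>c\<leftarrow>es. wire_val x (take i vs) (wire S c))"
      by (induction es) auto
    also have "\<dots> = (\<Sum>c\<leftarrow>es. if ev m x c then 1 else 0)"
      using wv by (intro arg_cong[where f=sum_list] map_cong) auto
    finally show ?thesis using assms by (simp add: gate_out_def cgate_def g)
  qed
  finally show ?case using g by (simp add: vs_def S_def)
qed

lemma Max_ins0_le: "finite X \<Longrightarrow> (\<And>y. y \<in> X \<Longrightarrow> y \<le> M) \<Longrightarrow> Max (insert 0 X) \<le> (M::nat)"
  by (simp add: Max_le_iff)

lemma foldr_max_ge: "c \<in> set es \<Longrightarrow> dep c \<le> foldr max (map dep es) 0"
  by (induction es) auto

lemma comp_depths:
  shows "i < length (po e) \<Longrightarrow> circ_depths (cmpl m e) ! i \<le> dep (po e ! i)"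
proof (induction i rule: less_induct)
  case (less i)
  define S where "S = po e"
  define ds where "ds = circ_depths (cmpl m e)"
  have cl: "closedp S" using po_closed S_def by simp
  have lends: "length ds = length S" by (simp add: ds_def S_def circ_depths_len cmpl_def)
  have iS: "i < length S" using less S_def by simp
  obtain A es where g: "S ! i = G A es" using cl iS unfolding closedp_def by (cases "S ! i") auto
  have wd: "wire_depth (take i ds) (wire S c) \<le> dep c" if c: "c \<in> set es" for c
  proof (cases c)
    case (V j) then show ?thesis by (simp add: wire_def)
  next
    case (G A' es')
    then have cG: "isG c" by simp
    have L: "(LEAST k. S ! k = c) < i" "S ! (LEAST k. S ! k = c) = c"
      using least_idx[OF cl iS _ cG] c g by auto
    have "ds ! (LEAST k. S ! k = c) \<le> dep c"
      using less.IH[of "(LEAST k. S ! k = c)"] L iS unfolding ds_def S_def by simp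
    then show ?thesis using L G lends iS by (simp add: wire_def)
  qed
  have "ds ! i = gate_depth (take i ds) (cgate m S (S ! i))"
    unfolding ds_def using circ_depths_nth[of i "cmpl m e"] iS by (simp add: cmpl_def S_def)
  also have "\<dots> \<le> dep (S ! i)"
    unfolding gate_depth_def cgate_def g
    apply simp
    using wd foldr_max_ge order_trans by meson
  finally show ?case by (simp add: ds_def S_def)
qed

lemma comp_correct:
  assumes "m > 0" "isG e" "vars e \<subseteq> {..<n}"
  shows "wf_circuit m n (cmpl m e)" "circ_eval m (cmpl m e) x = ev m x e"
        "circ_depth (cmpl m e) \<le> dep e" "circ_size (cmpl m e) = sz e"
proof -
  define S where "S = po e"
  have cl: "closedp S" using po_closed S_def by simp
  have ne: "S \<noteq> []" "last S = e" using po_last[OF assms(2)] S_def by auto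
  show "circ_size (cmpl m e) = sz e" by (simp add: circ_size_def cmpl_def po_length)
  have "\<forall>i < length (cmpl m e). acc (cmpl m e ! i) \<subseteq> {..<m} \<and>
        (\<forall>w \<in># ins (cmpl m e ! i). (\<forall>j. w = Var j \<longrightarrow> j < n) \<and> (\<forall>k. w = Gate k \<longrightarrow> k < i))"
  proof (intro allI impI)
    fix i assume i: "i < length (cmpl m e)"
    then have iS: "i < length S" by (simp add: cmpl_def S_def)
    obtain A es where g: "S ! i = G A es" using cl iS unfolding closedp_def by (cases "S ! i") auto
    have ci: "cmpl m e ! i = cgate m S (S ! i)" using iS by (simp add: cmpl_def S_def)
    have "acc (cmpl m e ! i) \<subseteq> {..<m}" using ci by (simp add: cgate_def)
    moreover have "\<forall>w \<in># ins (cmpl m e ! i). (\<forall>j. w = Var j \<longrightarrow> j < n) \<and> (\<forall>k. w = Gate k \<longrightarrow> k < i)"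
    proof
      fix w assume w: "w \<in># ins (cmpl m e ! i)"
      then obtain c where c: "c \<in> set es" "w = wire S c" using ci g by (auto simp: cgate_def)
      have gin: "S ! i \<in> set (po e)" using iS S_def by simp
      show "(\<forall>j. w = Var j \<longrightarrow> j < n) \<and> (\<forall>k. w = Gate k \<longrightarrow> k < i)"
      proof (cases c)
        case (V j)
        have "vars c \<subseteq> vars (S ! i)" using c g by auto
        then have "j \<in> vars e" using po_sub[OF gin] V by auto
        then show ?thesis using c V assms(3) by (auto simp: wire_def)
      next
        case (G A' es')
        then have "isG c" by simp
        then have "(LEAST k. S ! k = c) < i" using least_idx[OF cl iS] c g by auto
        then show ?thesis using c G by (auto simp: wire_def)
      qed
    qed
    ultimately show "acc (cmpl m e ! i) \<subseteq> {..<m} \<and>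
        (\<forall>w \<in># ins (cmpl m e ! i). (\<forall>j. w = Var j \<longrightarrow> j < n) \<and> (\<forall>k. w = Gate k \<longrightarrow> k < i))" ..
  qed
  moreover have "cmpl m e \<noteq> []" using ne S_def by (simp add: cmpl_def)
  ultimately show "wf_circuit m n (cmpl m e)" unfolding wf_circuit_def by blast
  show "circ_eval m (cmpl m e) x = ev m x e"
  proof -
    have l: "length (circ_vals m (cmpl m e) x) = length S" by (simp add: circ_vals_len cmpl_def S_def)
    have "circ_eval m (cmpl m e) x = circ_vals m (cmpl m e) x ! (length S - 1)"
      unfolding circ_eval_def using l ne by (metis last_conv_nth length_0_conv)
    also have "\<dots> = ev m x (S ! (length S - 1))"
      using comp_vals[OF assms(1)] ne S_def by simp
    also have "S ! (length S - 1) = e" using ne by (simp add: last_conv_nth)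
    finally show ?thesis .
  qed
  show "circ_depth (cmpl m e) \<le> dep e"
  proof -
    have "\<And>y. y \<in> set (circ_depths (cmpl m e)) \<Longrightarrow> y \<le> dep e"
    proof -
      fix y assume "y \<in> set (circ_depths (cmpl m e))"
      then obtain i where i: "i < length S" "y = circ_depths (cmpl m e) ! i"
        by (auto simp: in_set_conv_nth circ_depths_len cmpl_def S_def)
      have "y \<le> dep (S ! i)" using comp_depths i S_def by simp
      also have "\<dots> \<le> dep e" using po_sub[of "S ! i" e] i S_def by simp
      finally show "y \<le> dep e" .
    qed
    then show ?thesis unfolding circ_depth_def by (intro Max_ins0_le) auto
  qed
qed


lemma prime_dvd_choose_pow:
  fixes q :: nat
  assumes "prime q" "0 < i" "i < q ^ t"
  shows "q dvd (q ^ t choose i)"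
proof (rule ccontr)
  assume nd: "\<not> q dvd (q ^ t choose i)"
  have "i * (q ^ t choose i) = q ^ t * ((q ^ t - 1) choose (i - 1))"
    using assms(2) by (rule times_binomial_minus1_eq)
  then have d: "q ^ t dvd i * (q ^ t choose i)" by simp
  have "coprime (q ^ t) (q ^ t choose i)"
    using nd assms(1) by (metis coprime_commute coprime_power_right_iff prime_imp_coprime)
  then have "q ^ t dvd i" using d by (simp add: coprime_dvd_mult_left_iff)
  then show False using assms(2,3) by (simp add: nat_dvd_not_less)
qed

lemma choose_shift_mod:
  fixes q :: nat
  assumes "prime q" "j < q ^ t"
  shows "((N + q ^ t) choose j) mod q = (N choose j) mod q"
proof -
  have "(N + q ^ t) choose j = (q ^ t + N) choose j" by (simp add: add.commute)
  also have "\<dots> = (\<Sum>k\<le>j. (q ^ t choose k) * (N choose (j - k)))"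
    by (rule vandermonde[symmetric])
  also have "\<dots> = (q ^ t choose 0) * (N choose (j - 0)) + (\<Sum>k\<in>{1..j}. (q ^ t choose k) * (N choose (j - k)))"
  proof -
    have "{..j} = insert 0 {1..j}" by auto
    then show ?thesis by simp
  qed
  finally have e: "(N + q ^ t) choose j = (N choose j) + (\<Sum>k\<in>{1..j}. (q ^ t choose k) * (N choose (j - k)))"
    by simp
  have "q dvd (\<Sum>k\<in>{1..j}. (q ^ t choose k) * (N choose (j - k)))"
    using assms by (intro dvd_sum) (auto intro!: dvd_mult2 prime_dvd_choose_pow)
  then show ?thesis unfolding e by (metis dvd_imp_mod_0 mod_add_right_eq add.right_neutral)
qed

lemma choose_mod_period:
  fixes q :: nat
  assumes "prime q" "j < q ^ t"
  shows "(N choose j) mod q = ((N mod q ^ t) choose j) mod q"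
proof -
  have "((N mod q ^ t + q ^ t * k) choose j) mod q = ((N mod q ^ t) choose j) mod q" for k
  proof (induction k)
    case 0 then show ?case by simp
  next
    case (Suc k)
    have "N mod q ^ t + q ^ t * Suc k = (N mod q ^ t + q ^ t * k) + q ^ t" by simp
    then have "((N mod q ^ t + q ^ t * Suc k) choose j) mod q = (((N mod q ^ t + q ^ t * k) + q ^ t) choose j) mod q"
      by (simp only:)
    also have "\<dots> = ((N mod q ^ t + q ^ t * k) choose j) mod q" by (rule choose_shift_mod[OF assms])
    finally show ?case using Suc.IH by simp
  qed
  from this[of "N div q ^ t"] show ?thesis by simp
qed

lemma interp_exists:
  fixes g :: "nat \<Rightarrow> int"
  shows "\<exists>c. \<forall>N < M. g N = (\<Sum>j<M. c j * int (N choose j))"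
proof (induction M)
  case 0 then show ?case by simp
next
  case (Suc M)
  then obtain c where c: "\<forall>N<M. g N = (\<Sum>j<M. c j * int (N choose j))" by blast
  define c' where "c' = c(M := g M - (\<Sum>j<M. c j * int (M choose j)))"
  have "g N = (\<Sum>j<Suc M. c' j * int (N choose j))" if N: "N < Suc M" for N
  proof -
    have s: "(\<Sum>j<M. c' j * int (N choose j)) = (\<Sum>j<M. c j * int (N choose j))"
      by (intro sum.cong) (auto simp: c'_def)
    show ?thesis
    proof (cases "N < M")
      case True
      then show ?thesis using c s by simp
    next
      case False
      then have "N = M" using N by simp
      then show ?thesis using s by (simp add: c'_def)
    qed
  qed
  then show ?case by blast
qed

lemma count_subsets:
  fixes B j :: nat and Y :: "nat \<Rightarrow> bool"
  shows "(\<Sum>K\<in>{K. K \<subseteq> {..<B} \<and> card K = j}. (if \<forall>k\<in>K. Y k then 1 else 0 :: int))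
     = int (card {k. k < B \<and> Y k} choose j)"
proof -
  have fin: "finite {K. K \<subseteq> {..<B} \<and> card K = j}"
    by (rule finite_subset[of _ "Pow {..<B}"]) auto
  have "(\<Sum>K\<in>{K. K \<subseteq> {..<B} \<and> card K = j}. (if \<forall>k\<in>K. Y k then 1 else 0 :: int))
      = (\<Sum>K\<in>{K. K \<subseteq> {..<B} \<and> card K = j}. of_bool (\<forall>k\<in>K. Y k))"
    by (simp add: of_bool_def)
  also have "\<dots> = int (card ({K. K \<subseteq> {..<B} \<and> card K = j} \<inter> {K. \<forall>k\<in>K. Y k}))"
    using fin by simp
  also have "{K. K \<subseteq> {..<B} \<and> card K = j} \<inter> {K. \<forall>k\<in>K. Y k} = {K. K \<subseteq> {k. k < B \<and> Y k} \<and> card K = j}"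
    by auto
  also have "card \<dots> = card {k. k < B \<and> Y k} choose j"
    by (rule n_subsets) simp
  finally show ?thesis .
qed

lemma lin_unique:
  fixes r :: nat and f z c :: int
  assumes "prime r" "\<not> int r dvd f"
  shows "card {y. y < r \<and> (int y * f + z) mod int r = c mod int r} = 1"
proof -
  have r2: "r \<ge> 2" using assms(1) prime_ge_2_nat by blast
  have "coprime f (int r)"
    using assms by (metis coprime_commute prime_imp_coprime prime_nat_int_transfer)
  then obtain u where u: "[f * u = 1] (mod int r)" using cong_solve_coprime_int by blast
  define y0 where "y0 = nat (((c - z) * u) mod int r)"
  have y0r: "y0 < r" using r2 by (simp add: y0_def nat_less_iff)
  have "[int y0 * f + z = ((c - z) * u) * f + z] (mod int r)"
    unfolding y0_def using r2 by (intro cong_add cong_mult) (auto simp: cong_def)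
  moreover have "[((c - z) * u) * f + z = (c - z) * 1 + z] (mod int r)"
  proof -
    have uf: "[u * f = 1] (mod int r)" using u by (simp add: mult.commute)
    have "[(c - z) * (u * f) = (c - z) * 1] (mod int r)" by (rule cong_mult[OF cong_refl uf])
    then have "[(c - z) * (u * f) + z = (c - z) * 1 + z] (mod int r)" by (rule cong_add[OF _ cong_refl])
    then show ?thesis by (simp add: ac_simps)
  qed
  ultimately have "[int y0 * f + z = c] (mod int r)" by (auto intro: cong_trans)
  then have y0s: "(int y0 * f + z) mod int r = c mod int r" by (simp add: cong_def)
  have uniq: "y = y0" if "y < r" "(int y * f + z) mod int r = c mod int r" for y
  proof -
    have "[int y * f + z = int y0 * f + z] (mod int r)" using that y0s by (simp add: cong_def)
    then have "[int y * f = int y0 * f] (mod int r)" using cong_add_rcancel by blast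
    then have "int r dvd (int y - int y0) * f" by (simp add: cong_iff_dvd_diff left_diff_distrib)
    then have "int r dvd (int y - int y0)"
      using assms by (metis prime_dvd_mult_iff prime_nat_int_transfer)
    moreover have "\<bar>int y - int y0\<bar> < int r" using that(1) y0r by linarith
    ultimately show ?thesis
    proof -
      assume a: "int r dvd (int y - int y0)" "\<bar>int y - int y0\<bar> < int r"
      show "y = y0"
      proof (rule ccontr)
        assume "y \<noteq> y0"
        then have "int y - int y0 \<noteq> 0" by simp
        then have "\<bar>int r\<bar> \<le> \<bar>int y - int y0\<bar>" using a(1) dvd_imp_le_int by blast
        then show False using a(2) by simp
      qed
    qed 
  qed
  have "{y. y < r \<and> (int y * f + z) mod int r = c mod int r} = {y0}"
    using uniq y0r y0s by blast
  then show ?thesis by simp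
qed

lemma count_nonzero:
  fixes r :: nat and K :: "nat set" and F :: "nat \<Rightarrow> int" and c :: int
  assumes "prime r" "finite K" "k0 \<in> K" "\<not> int r dvd F k0"
  shows "(\<Sum>a\<in>PiE K (\<lambda>_. {..<r}). (if (\<Sum>k\<in>K. int (a k) * F k) mod int r = c mod int r then 1 else 0 :: int))
         = int r ^ (card K - 1)"
proof -
  define K' where "K' = K - {k0}"
  have KK: "K = insert k0 K'" "k0 \<notin> K'" "finite K'" using assms K'_def by auto
  define B where "B = (\<lambda>_::nat. {..<r})"
  define h where "h = (\<lambda>a. (if (\<Sum>k\<in>K. int (a k) * F k) mod int r = c mod int r then 1 else 0 :: int))"
  have "(\<Sum>a\<in>PiE K B. h a) = (\<Sum>a\<in>(\<lambda>(y, g). g(k0 := y)) ` (B k0 \<times> PiE K' B). h a)"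
    using KK by (simp add: PiE_insert_eq)
  also have "\<dots> = (\<Sum>p\<in>B k0 \<times> PiE K' B. h ((\<lambda>(y, g). g(k0 := y)) p))"
    using KK by (intro sum.reindex[unfolded comp_def]) (simp add: inj_combinator)
  also have "\<dots> = (\<Sum>y\<in>B k0. \<Sum>g\<in>PiE K' B. h (g(k0 := y)))"
    by (simp add: sum.cartesian_product split_def)
  also have "\<dots> = (\<Sum>g\<in>PiE K' B. \<Sum>y\<in>B k0. h (g(k0 := y)))"
    by (rule sum.swap)
  also have "\<dots> = (\<Sum>g\<in>PiE K' B. 1)"
  proof (intro sum.cong refl)
    fix g assume g: "g \<in> PiE K' B"
    define z where "z = (\<Sum>k\<in>K'. int (g k) * F k)"
    have S: "(\<Sum>k\<in>K. int ((g(k0 := y)) k) * F k) = int y * F k0 + z" for y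
    proof -
      have "(\<Sum>k\<in>K'. int ((g(k0 := y)) k) * F k) = z"
        unfolding z_def using KK by (intro sum.cong) auto
      then show ?thesis using KK by (simp add: sum.insert)
    qed
    have "(\<Sum>y\<in>B k0. h (g(k0 := y))) = (\<Sum>y\<in>{..<r}. (if (int y * F k0 + z) mod int r = c mod int r then 1 else 0 :: int))"
      unfolding h_def B_def S by simp
    also have "\<dots> = int (card {y. y < r \<and> (int y * F k0 + z) mod int r = c mod int r})"
      by (simp add: sum.If_cases lessThan_def Collect_conj_eq Int_commute)
    also have "\<dots> = 1" using lin_unique[OF assms(1,4)] by simp
    finally show "(\<Sum>y\<in>B k0. h (g(k0 := y))) = 1" .
  qed
  also have "\<dots> = int (card (PiE K' B))" by simp
  also have "\<dots> = int r ^ card K'" using KK by (simp add: card_PiE B_def)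
  also have "card K' = card K - 1" using KK by simp
  finally show ?thesis by (simp add: h_def B_def)
qed

lemma charsum:
  fixes r :: nat and K :: "nat set" and F :: "nat \<Rightarrow> int"
  assumes "prime r" "finite K"
  shows "(\<Sum>a\<in>PiE K (\<lambda>_. {..<r}).
            (if (\<Sum>k\<in>K. int (a k) * F k) mod int r = 0 then 1 else 0)
          - (if (\<Sum>k\<in>K. int (a k) * F k) mod int r = 1 then 1 else 0 :: int))
       = (if \<forall>k\<in>K. int r dvd F k then int r ^ card K else 0)"
proof -
  have r2: "r \<ge> 2" using assms(1) prime_ge_2_nat by blast
  show ?thesis
  proof (cases "\<forall>k\<in>K. int r dvd F k")
    case True
    have "(\<Sum>k\<in>K. int (a k) * F k) mod int r = 0" for a
      using True by (simp add: dvd_sum)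
    then have "(\<Sum>a\<in>PiE K (\<lambda>_. {..<r}).
            (if (\<Sum>k\<in>K. int (a k) * F k) mod int r = 0 then 1 else 0)
          - (if (\<Sum>k\<in>K. int (a k) * F k) mod int r = 1 then 1 else 0 :: int))
        = (\<Sum>a\<in>PiE K (\<lambda>_. {..<r}). 1)" by simp
    also have "\<dots> = int r ^ card K" using assms(2) by (simp add: card_PiE)
    finally show ?thesis using True by simp
  next
    case False
    then obtain k0 where k0: "k0 \<in> K" "\<not> int r dvd F k0" by blast
    have e0: "(0::int) mod int r = 0" and e1: "(1::int) mod int r = 1" using r2 by auto
    have "(\<Sum>a\<in>PiE K (\<lambda>_. {..<r}).
            (if (\<Sum>k\<in>K. int (a k) * F k) mod int r = 0 then 1 else 0)
          - (if (\<Sum>k\<in>K. int (a k) * F k) mod int r = 1 then 1 else 0 :: int))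
       = (\<Sum>a\<in>PiE K (\<lambda>_. {..<r}). (if (\<Sum>k\<in>K. int (a k) * F k) mod int r = 0 mod int r then 1 else 0 :: int))
       - (\<Sum>a\<in>PiE K (\<lambda>_. {..<r}). (if (\<Sum>k\<in>K. int (a k) * F k) mod int r = 1 mod int r then 1 else 0 :: int))"
      unfolding e0 e1 by (simp add: sum_subtractf)
    also have "\<dots> = 0"
      using count_nonzero[of r K k0 F 0, OF assms k0] count_nonzero[of r K k0 F 1, OF assms k0] by (simp only: diff_self)
    finally show ?thesis using False by auto
  qed
qed


type_synonym form = "expr list \<times> nat"

definition lval :: "nat \<Rightarrow> (nat \<Rightarrow> bool) \<Rightarrow> expr list \<Rightarrow> int" where
  "lval m x es = (\<Sum>e\<leftarrow>es. if ev m x e then 1 else 0)"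

definition fval :: "nat \<Rightarrow> (nat \<Rightarrow> bool) \<Rightarrow> form \<Rightarrow> int" where
  "fval m x f = int (snd f) + lval m x (fst f)"

definition scale :: "nat \<Rightarrow> form \<Rightarrow> form" where
  "scale k f = (concat (replicate k (fst f)), k * snd f)"

definition fsum :: "form list \<Rightarrow> form" where
  "fsum fs = (concat (map fst fs), sum_list (map snd fs))"

definition gateF :: "nat \<Rightarrow> (int \<Rightarrow> bool) \<Rightarrow> form \<Rightarrow> expr" where
  "gateF m Pr f = G {v. v < m \<and> Pr (int v + int (snd f))} (fst f)"

definition wform :: "nat \<Rightarrow> (expr \<times> int) list \<Rightarrow> form" where
  "wform q ces = (concat (map (\<lambda>(e,c). replicate (nat (c mod int q)) e) ces), 0)"

definition enum :: "'a set \<Rightarrow> 'a list" where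
  "enum S = (SOME xs. set xs = S \<and> distinct xs)"

lemma enum: "finite S \<Longrightarrow> set (enum S) = S \<and> distinct (enum S)"
  unfolding enum_def by (rule someI_ex) (rule finite_distinct_list)

lemma sum_list_enum: "finite S \<Longrightarrow> (\<Sum>y\<leftarrow>enum S. f y) = sum f S"
  using enum[of S] by (metis sum_list_distinct_conv_sum_set)

lemma lval_append[simp]: "lval m x (xs @ ys) = lval m x xs + lval m x ys"
  by (simp add: lval_def)

lemma lval_concat: "lval m x (concat xss) = (\<Sum>xs\<leftarrow>xss. lval m x xs)"
  by (induction xss) (auto simp: lval_def)

lemma lval_replicate: "lval m x (concat (replicate k xs)) = int k * lval m x xs"
  by (induction k) (auto simp: lval_def algebra_simps)

lemma lval_replicate1: "lval m x (replicate k e) = int k * (if ev m x e then 1 else 0)"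
  by (induction k) (auto simp: lval_def algebra_simps)

lemma fval_scale: "fval m x (scale k f) = int k * fval m x f"
  by (simp add: fval_def scale_def lval_replicate algebra_simps)

lemma fval_fsum: "fval m x (fsum fs) = (\<Sum>f\<leftarrow>fs. fval m x f)"
proof (induction fs)
  case Nil then show ?case by (simp add: fval_def fsum_def lval_def)
next
  case (Cons f fs)
  then show ?case by (simp add: fval_def fsum_def)
qed

lemma int_sum_list_if: "int (\<Sum>e\<leftarrow>es. if Q e then 1 else 0) = (\<Sum>e\<leftarrow>es. if Q e then 1 else 0)"
  by (induction es) auto

lemma ev_gateF:
  assumes "m > 0" "\<And>v. Pr v = Pr (v mod int m)"
  shows "ev m x (gateF m Pr f) = Pr (fval m x f)"
proof -
  define S where "S = (\<Sum>e\<leftarrow>fst f. if ev m x e then 1 else 0 :: nat)"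
  have S: "int S = lval m x (fst f)"
    unfolding S_def lval_def by (rule int_sum_list_if)
  have "ev m x (gateF m Pr f) = Pr (int (S mod m) + int (snd f))"
    using assms(1) by (simp add: gateF_def S_def)
  also have "\<dots> = Pr ((int (S mod m) + int (snd f)) mod int m)" using assms(2) by blast
  also have "(int (S mod m) + int (snd f)) mod int m = (int S + int (snd f)) mod int m"
    by (simp add: zmod_int mod_add_left_eq)
  also have "Pr \<dots> = Pr (int S + int (snd f))" using assms(2) by metis
  finally show ?thesis using S by (simp add: fval_def add.commute)
qed

lemma fval_wform_mod:
  assumes "q > 0"
  shows "fval m x (wform q ces) mod int q = (\<Sum>(e,c)\<leftarrow>ces. c * (if ev m x e then 1 else 0)) mod int q"
proof (induction ces)
  case Nil then show ?case by (simp add: fval_def wform_def lval_def)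
next
  case (Cons ec ces)
  obtain e c where ec: "ec = (e, c)" by force
  have h: "fval m x (wform q (ec # ces)) = int (nat (c mod int q)) * (if ev m x e then 1 else 0) + fval m x (wform q ces)"
    by (simp add: fval_def wform_def ec lval_replicate1)
  have "int (nat (c mod int q)) = c mod int q"
    using assms by simp
  then have "fval m x (wform q (ec # ces)) mod int q
        = ((c mod int q) * (if ev m x e then 1 else 0) + fval m x (wform q ces)) mod int q"
    using h by simp
  also have "\<dots> = (c * (if ev m x e then 1 else 0) + fval m x (wform q ces) mod int q) mod int q"
    by (simp add: mod_simps)
  also have "\<dots> = (c * (if ev m x e then 1 else 0) + (\<Sum>(e,c)\<leftarrow>ces. c * (if ev m x e then 1 else 0))) mod int q"
    using Cons.IH by (simp add: mod_simps)
  finally show ?case by (simp add: ec)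
qed


locale cons =
  fixes m n B :: nat and P :: "nat set" and d :: "nat \<Rightarrow> nat" and cc :: "nat \<Rightarrow> nat \<Rightarrow> int"
  assumes m_pos: "0 < m"
  and P_sub: "\<And>p. p \<in> P \<Longrightarrow> prime p \<and> p dvd m"
  and P_fin: "finite P"
  and P_card: "2 \<le> card P"
  and n_pos: "1 \<le> n"
  and d_pow: "\<And>r. r \<in> P \<Longrightarrow> \<exists>t. d r = r ^ t"
  and cc_prop: "\<And>r N. r \<in> P \<Longrightarrow> N < d r \<Longrightarrow>
       (if N mod d r = B mod d r then 0 else 1) = (\<Sum>j<d r. cc r j * int (N choose j))"
  and big: "\<And>T. T \<subseteq> P \<Longrightarrow> card P \<le> card T + 1 \<Longrightarrow> B < (\<Prod>r\<in>T. d r)"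
  and B_pos: "1 \<le> B"
begin

definition Tq :: "nat \<Rightarrow> nat set" where "Tq q = P - {q}"
definition w :: "nat set \<Rightarrow> nat \<Rightarrow> nat" where "w T r = \<Prod>(T - {r})"
definition Sig :: "nat set \<Rightarrow> nat set \<Rightarrow> (nat \<Rightarrow> (nat \<Rightarrow> nat) \<times> nat) set" where
  "Sig T K = PiE T (\<lambda>r. PiE K (\<lambda>_. {..<r}) \<times> {0, 1})"
definition Ks :: "nat \<Rightarrow> nat set set" where "Ks q = {K. K \<subseteq> {..<B} \<and> card K < d q}"
definition comb :: "(nat \<Rightarrow> nat \<Rightarrow> form) \<Rightarrow> nat \<Rightarrow> nat set \<Rightarrow> nat set \<Rightarrow> (nat \<Rightarrow> (nat \<Rightarrow> nat) \<times> nat) \<Rightarrow> form" where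
  "comb F i T K \<sigma> = fsum (concat (map (\<lambda>r. map (\<lambda>k. scale (w T r * fst (\<sigma> r) k) (F (i * B + k) r))
       (sorted_list_of_set K)) (sorted_list_of_set T)))"
definition cnd :: "nat set \<Rightarrow> (nat \<Rightarrow> (nat \<Rightarrow> nat) \<times> nat) \<Rightarrow> int \<Rightarrow> bool" where
  "cnd T \<sigma> = (\<lambda>v. \<forall>r\<in>T. v mod int r = int (w T r * snd (\<sigma> r)) mod int r)"
definition sgn :: "nat set \<Rightarrow> (nat \<Rightarrow> (nat \<Rightarrow> nat) \<times> nat) \<Rightarrow> int" where
  "sgn T \<sigma> = (\<Prod>r\<in>T. if snd (\<sigma> r) = 0 then 1 else -1)"
definition ivs :: "nat \<Rightarrow> nat set \<Rightarrow> int" where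
  "ivs q K = (SOME v. [int (\<Prod>r\<in>Tq q. r ^ card K) * v = 1] (mod int q))"

primrec Lf :: "nat \<Rightarrow> nat \<Rightarrow> nat \<Rightarrow> form" where
  "Lf 0 i r = ([V (min i (n - 1))], r - 1)"
| "Lf (Suc l) i q = wform q (concat (map (\<lambda>K. map (\<lambda>\<sigma>.
      (gateF m (cnd (Tq q) \<sigma>) (comb (Lf l) i (Tq q) K \<sigma>), cc q (card K) * ivs q K * sgn (Tq q) \<sigma>))
      (enum (Sig (Tq q) K))) (enum (Ks q))))"

definition top :: "nat \<Rightarrow> expr" where
  "top L = gateF m (\<lambda>v. \<forall>r\<in>P. v mod int r = 0) (fsum (map (\<lambda>r. scale (w P r) (Lf L 0 r)) (sorted_list_of_set P)))"

definition Yv :: "(nat \<Rightarrow> bool) \<Rightarrow> nat \<Rightarrow> nat \<Rightarrow> bool" where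
  "Yv x l i = (\<forall>u < B ^ l. x (min (i * B ^ l + u) (n - 1)))"

lemma sum_list_concat_map: "(\<Sum>y\<leftarrow>concat xss. f y) = (\<Sum>xs\<leftarrow>xss. \<Sum>y\<leftarrow>xs. f y)"
  by (induction xss) auto

lemma add_dvd_mod_int: "(c::int) dvd b \<Longrightarrow> (a + b) mod c = a mod c"
proof -
  assume "c dvd b"
  then obtain k where "b = c * k" by blast
  then show ?thesis by simp
qed

lemma P_prime: "r \<in> P \<Longrightarrow> prime r" using P_sub by blast
lemma P_dvd: "r \<in> P \<Longrightarrow> r dvd m" using P_sub by blast

lemma w_coprime: "T \<subseteq> P \<Longrightarrow> r \<in> T \<Longrightarrow> coprime (int (w T r)) (int r)"
proof -
  assume a: "T \<subseteq> P" "r \<in> T"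
  have "coprime (w T r) r" unfolding w_def
  proof (rule prod_coprime_left)
    fix i assume i: "i \<in> T - {r}"
    then have "prime i" "prime r" "i \<noteq> r" using a P_prime by auto
    then show "coprime i r" by (rule primes_coprime)
  qed
  then show ?thesis by simp
qed

lemma w_dvd: "T \<subseteq> P \<Longrightarrow> r \<in> T \<Longrightarrow> r' \<in> T \<Longrightarrow> r' \<noteq> r \<Longrightarrow> int r dvd int (w T r')"
proof -
  assume a: "T \<subseteq> P" "r \<in> T" "r' \<in> T" "r' \<noteq> r"
  have "finite T" using a(1) P_fin finite_subset by blast
  moreover have "r \<in> T - {r'}" using a by auto
  ultimately have "r dvd \<Prod>(T - {r'})" by (metis dvd_prodI finite_Diff id_apply)
  then show ?thesis unfolding w_def using int_dvd_int_iff by blast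
qed

lemma cnd_inv: "T \<subseteq> P \<Longrightarrow> cnd T \<sigma> v = cnd T \<sigma> (v mod int m)"
proof -
  assume T: "T \<subseteq> P"
  have "v mod int m mod int r = v mod int r" if "r \<in> T" for r
    using P_dvd[of r] T that by (intro mod_mod_cancel) auto
  then show ?thesis unfolding cnd_def by auto
qed

lemma fval_comb:
  assumes "T \<subseteq> P" "finite K"
  shows "fval m x (comb F i T K \<sigma>) = (\<Sum>r\<in>T. int (w T r) * (\<Sum>k\<in>K. int (fst (\<sigma> r) k) * fval m x (F (i * B + k) r)))"
proof -
  have fT: "finite T" using assms(1) P_fin finite_subset by blast
  have "fval m x (comb F i T K \<sigma>) = (\<Sum>r\<leftarrow>sorted_list_of_set T. \<Sum>k\<leftarrow>sorted_list_of_set K.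
          int (w T r * fst (\<sigma> r) k) * fval m x (F (i * B + k) r))"
    unfolding comb_def fval_fsum by (simp add: sum_list_concat_map fval_scale comp_def)
  also have "\<dots> = (\<Sum>r\<in>T. \<Sum>k\<in>K. int (w T r * fst (\<sigma> r) k) * fval m x (F (i * B + k) r))"
    using fT assms(2) by (simp add: sum_list_distinct_conv_sum_set)
  also have "\<dots> = (\<Sum>r\<in>T. int (w T r) * (\<Sum>k\<in>K. int (fst (\<sigma> r) k) * fval m x (F (i * B + k) r)))"
    by (simp add: sum_distrib_left mult.assoc)
  finally show ?thesis .
qed

lemma ev_comb_gate:
  assumes "T \<subseteq> P" "finite K"
  shows "ev m x (gateF m (cnd T \<sigma>) (comb F i T K \<sigma>)) =
     (\<forall>r\<in>T. (\<Sum>k\<in>K. int (fst (\<sigma> r) k) * fval m x (F (i * B + k) r)) mod int r = int (snd (\<sigma> r)) mod int r)"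
proof -
  have fT: "finite T" using assms(1) P_fin finite_subset by blast
  define X where "X r = (\<Sum>k\<in>K. int (fst (\<sigma> r) k) * fval m x (F (i * B + k) r))" for r
  have ev0: "ev m x (gateF m (cnd T \<sigma>) (comb F i T K \<sigma>)) = cnd T \<sigma> (fval m x (comb F i T K \<sigma>))"
    by (rule ev_gateF[OF m_pos]) (rule cnd_inv[OF assms(1)])
  have ev: "ev m x (gateF m (cnd T \<sigma>) (comb F i T K \<sigma>)) = cnd T \<sigma> (\<Sum>r\<in>T. int (w T r) * X r)"
    unfolding ev0 fval_comb[OF assms] X_def ..
  have red: "(\<Sum>r'\<in>T. int (w T r') * X r') mod int r = (int (w T r) * X r) mod int r" if r: "r \<in> T" for r
  proof -
    have "(\<Sum>r'\<in>T. int (w T r') * X r') = int (w T r) * X r + (\<Sum>r'\<in>T - {r}. int (w T r') * X r')"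
      using fT r by (simp add: sum.remove)
    moreover have "int r dvd (\<Sum>r'\<in>T - {r}. int (w T r') * X r')"
      using w_dvd[OF assms(1) r] by (intro dvd_sum) auto
    ultimately show ?thesis using add_dvd_mod_int by simp
  qed
  have "cnd T \<sigma> (\<Sum>r\<in>T. int (w T r) * X r) =
       (\<forall>r\<in>T. (int (w T r) * X r) mod int r = (int (w T r) * int (snd (\<sigma> r))) mod int r)"
    unfolding cnd_def of_nat_mult using red by (intro ball_cong refl) simp
  also have "\<dots> = (\<forall>r\<in>T. X r mod int r = int (snd (\<sigma> r)) mod int r)"
  proof -
    have eq: "((int (w T r) * X r) mod int r = (int (w T r) * c) mod int r) = (X r mod int r = c mod int r)"
      if "r \<in> T" for r c
      using cong_mult_lcancel[OF w_coprime[OF assms(1) that], of "X r" c] unfolding cong_def .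
    show ?thesis using eq by (intro ball_cong refl) simp
  qed
  finally have c: "cnd T \<sigma> (\<Sum>r\<in>T. int (w T r) * X r) = (\<forall>r\<in>T. X r mod int r = int (snd (\<sigma> r)) mod int r)" .
  show ?thesis by (simp only: ev c) (simp only: X_def)
qed

lemma sig_sum:
  assumes T: "T \<subseteq> P" and K: "finite K"
  shows "(\<Sum>\<sigma>\<in>Sig T K. sgn T \<sigma> * (if ev m x (gateF m (cnd T \<sigma>) (comb F i T K \<sigma>)) then 1 else 0))
       = (\<Prod>r\<in>T. int r ^ card K) * (if \<forall>r\<in>T. \<forall>k\<in>K. int r dvd fval m x (F (i * B + k) r) then 1 else 0)"
proof -
  have fT: "finite T" using T P_fin finite_subset by blast
  define X where "X r a = (\<Sum>k\<in>K. int (a k) * fval m x (F (i * B + k) r))" for r a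
  define g where "g r z = (if snd z = 0 then 1 else -1) * (if X r (fst z) mod int r = int (snd z) mod int r then 1 else 0 :: int)" for r z
  define S where "S r = PiE K (\<lambda>_. {..<r}) \<times> {0::nat, 1}" for r :: nat
  have summand: "sgn T \<sigma> * (if ev m x (gateF m (cnd T \<sigma>) (comb F i T K \<sigma>)) then 1 else 0) = (\<Prod>r\<in>T. g r (\<sigma> r))" for \<sigma>
  proof -
    have "(if ev m x (gateF m (cnd T \<sigma>) (comb F i T K \<sigma>)) then 1 else 0 :: int)
        = (\<Prod>r\<in>T. (if X r (fst (\<sigma> r)) mod int r = int (snd (\<sigma> r)) mod int r then 1 else 0))"
      unfolding ev_comb_gate[OF T K] X_def using fT by (simp add: prod.neutral_const prod_zero_iff del: mod_mod_trivial)
    then show ?thesis unfolding sgn_def g_def by (simp add: prod.distrib)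
  qed
  have "(\<Sum>\<sigma>\<in>Sig T K. sgn T \<sigma> * (if ev m x (gateF m (cnd T \<sigma>) (comb F i T K \<sigma>)) then 1 else 0))
      = (\<Sum>\<sigma>\<in>PiE T S. \<Prod>r\<in>T. g r (\<sigma> r))"
    unfolding summand Sig_def S_def ..
  also have "\<dots> = (\<Prod>r\<in>T. \<Sum>z\<in>S r. g r z)"
    using fT K by (intro prod_sum_PiE[symmetric]) (auto simp: S_def finite_PiE)
  also have "\<dots> = (\<Prod>r\<in>T. (if \<forall>k\<in>K. int r dvd fval m x (F (i * B + k) r) then int r ^ card K else 0))"
  proof (intro prod.cong refl)
    fix r assume r: "r \<in> T"
    have pr: "prime r" using r T P_prime by blast
    then have r2: "r \<ge> 2" using prime_ge_2_nat by blast
    have "(\<Sum>z\<in>S r. g r z) = (\<Sum>(a,c)\<in>PiE K (\<lambda>_. {..<r}) \<times> {0::nat, 1}. g r (a, c))"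
      unfolding S_def by (simp add: split_def)
    also have "\<dots> = (\<Sum>a\<in>PiE K (\<lambda>_. {..<r}). \<Sum>c\<in>{0::nat, 1}. g r (a, c))"
      by (rule sum.cartesian_product[symmetric])
    also have "\<dots> = (\<Sum>a\<in>PiE K (\<lambda>_. {..<r}).
            (if (\<Sum>k\<in>K. int (a k) * fval m x (F (i * B + k) r)) mod int r = 0 then 1 else 0)
          - (if (\<Sum>k\<in>K. int (a k) * fval m x (F (i * B + k) r)) mod int r = 1 then 1 else 0 :: int))"
      using r2 by (intro sum.cong refl) (simp add: g_def X_def)
    also have "\<dots> = (if \<forall>k\<in>K. int r dvd fval m x (F (i * B + k) r) then int r ^ card K else 0)"
      by (rule charsum[OF pr K])
    finally show "(\<Sum>z\<in>S r. g r z) = \<dots>" .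
  qed
  also have "\<dots> = (\<Prod>r\<in>T. int r ^ card K) * (if \<forall>r\<in>T. \<forall>k\<in>K. int r dvd fval m x (F (i * B + k) r) then 1 else 0)"
  proof (cases "\<forall>r\<in>T. \<forall>k\<in>K. int r dvd fval m x (F (i * B + k) r)")
    case True
    then show ?thesis by simp
  next
    case False
    then obtain r0 where r0: "r0 \<in> T" "\<not> (\<forall>k\<in>K. int r0 dvd fval m x (F (i * B + k) r0))" by blast
    then have "(\<Prod>r\<in>T. (if \<forall>k\<in>K. int r dvd fval m x (F (i * B + k) r) then int r ^ card K else 0)) = 0"
      using fT by (subst prod_zero_iff) auto
    moreover have "(if \<forall>r\<in>T. \<forall>k\<in>K. int r dvd fval m x (F (i * B + k) r) then 1 else 0 :: int) = 0"
      using False by simp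
    ultimately show ?thesis by (simp only: mult_zero_right)
  qed
  finally show ?thesis .
qed

lemma Tq_sub: "Tq q \<subseteq> P" by (auto simp: Tq_def)

lemma ivs_prop:
  assumes q: "q \<in> P"
  shows "[int (\<Prod>r\<in>Tq q. r ^ card K) * ivs q K = 1] (mod int q)"
proof -
  have "coprime (\<Prod>r\<in>Tq q. r ^ card K) q"
  proof (rule prod_coprime_left)
    fix r assume r: "r \<in> Tq q"
    then have "prime r" "prime q" "r \<noteq> q" using q P_prime by (auto simp: Tq_def)
    then have "coprime r q" by (rule primes_coprime)
    then show "coprime (r ^ card K) q" by simp
  qed
  then have "coprime (int (\<Prod>r\<in>Tq q. r ^ card K)) (int q)" by (simp only: coprime_int_iff)
  then have "\<exists>v. [int (\<Prod>r\<in>Tq q. r ^ card K) * v = 1] (mod int q)" by (rule cong_solve_coprime_int)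
  then show ?thesis unfolding ivs_def by (rule someI_ex)
qed

lemma Ks_fin: "finite (Ks q)"
  unfolding Ks_def by (rule finite_subset[of _ "Pow {..<B}"]) auto

lemma Ks_fin2: "K \<in> Ks q \<Longrightarrow> finite K"
  unfolding Ks_def using finite_subset by blast

lemma Sig_fin: "T \<subseteq> P \<Longrightarrow> finite K \<Longrightarrow> finite (Sig T K)"
  unfolding Sig_def using P_fin finite_subset by (intro finite_PiE) (auto intro!: finite_PiE)

lemma sum_mod_cong:
  fixes f g :: "'a \<Rightarrow> int"
  assumes "\<And>a. a \<in> A \<Longrightarrow> f a mod q = g a mod q"
  shows "sum f A mod q = sum g A mod q"
proof -
  have "sum f A mod q = (\<Sum>a\<in>A. f a mod q) mod q" by (simp add: mod_sum_eq)
  also have "\<dots> = (\<Sum>a\<in>A. g a mod q) mod q" using assms by (simp cong: sum.cong)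
  also have "\<dots> = sum g A mod q" by (simp add: mod_sum_eq)
  finally show ?thesis .
qed

lemma Lf_Suc_mod:
  assumes q: "q \<in> P"
  shows "fval m x (Lf (Suc l) i q) mod int q =
    (\<Sum>K\<in>Ks q. cc q (card K) * (if \<forall>r\<in>Tq q. \<forall>k\<in>K. int r dvd fval m x (Lf l (i * B + k) r) then 1 else 0)) mod int q"
proof -
  have q0: "q > 0" using q P_prime prime_gt_0_nat by blast
  define A where "A K = (if \<forall>r\<in>Tq q. \<forall>k\<in>K. int r dvd fval m x (Lf l (i * B + k) r) then 1 else 0 :: int)" for K
  define gt where "gt K \<sigma> = gateF m (cnd (Tq q) \<sigma>) (comb (Lf l) i (Tq q) K \<sigma>)" for K \<sigma>
  have "fval m x (Lf (Suc l) i q) mod int q =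
      (\<Sum>K\<leftarrow>enum (Ks q). \<Sum>\<sigma>\<leftarrow>enum (Sig (Tq q) K). cc q (card K) * ivs q K * sgn (Tq q) \<sigma> * (if ev m x (gt K \<sigma>) then 1 else 0)) mod int q"
    unfolding Lf.simps fval_wform_mod[OF q0] sum_list_concat_map gt_def by (simp add: comp_def)
  also have "\<dots> = (\<Sum>K\<in>Ks q. \<Sum>\<sigma>\<in>Sig (Tq q) K. cc q (card K) * ivs q K * sgn (Tq q) \<sigma> * (if ev m x (gt K \<sigma>) then 1 else 0)) mod int q"
    using Ks_fin Sig_fin[OF Tq_sub] Ks_fin2 by (simp add: sum_list_enum cong: sum.cong)
  also have "\<dots> = (\<Sum>K\<in>Ks q. cc q (card K) * ivs q K * (\<Prod>r\<in>Tq q. int r ^ card K) * A K) mod int q"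
  proof -
    have "(\<Sum>\<sigma>\<in>Sig (Tq q) K. cc q (card K) * ivs q K * sgn (Tq q) \<sigma> * (if ev m x (gt K \<sigma>) then 1 else 0))
        = cc q (card K) * ivs q K * (\<Prod>r\<in>Tq q. int r ^ card K) * A K" if K: "K \<in> Ks q" for K
    proof -
      have "(\<Sum>\<sigma>\<in>Sig (Tq q) K. cc q (card K) * ivs q K * sgn (Tq q) \<sigma> * (if ev m x (gt K \<sigma>) then 1 else 0))
          = cc q (card K) * ivs q K * (\<Sum>\<sigma>\<in>Sig (Tq q) K. sgn (Tq q) \<sigma> * (if ev m x (gt K \<sigma>) then 1 else 0))"
        by (simp add: sum_distrib_left mult.assoc)
      also have "\<dots> = cc q (card K) * ivs q K * ((\<Prod>r\<in>Tq q. int r ^ card K) * A K)"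
        unfolding gt_def A_def using sig_sum[OF Tq_sub Ks_fin2[OF K]] by simp
      finally show ?thesis by (simp add: mult.assoc)
    qed
    then show ?thesis by (simp cong: sum.cong)
  qed
  also have "\<dots> = (\<Sum>K\<in>Ks q. cc q (card K) * A K) mod int q"
  proof (rule sum_mod_cong)
    fix K
    have c: "[int (\<Prod>r\<in>Tq q. r ^ card K) * ivs q K = 1] (mod int q)" by (rule ivs_prop[OF q])
    have "[cc q (card K) * (int (\<Prod>r\<in>Tq q. r ^ card K) * ivs q K) * A K = cc q (card K) * 1 * A K] (mod int q)"
      by (intro cong_mult cong_refl c)
    then show "cc q (card K) * ivs q K * (\<Prod>r\<in>Tq q. int r ^ card K) * A K mod int q = cc q (card K) * A K mod int q"
      unfolding cong_def by (simp add: ac_simps)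
  qed
  finally show ?thesis unfolding A_def .
qed

lemma d_pos: "q \<in> P \<Longrightarrow> d q > 0"
  using d_pow P_prime prime_gt_0_nat by (metis zero_less_power)

lemma poly_part:
  assumes q: "q \<in> P"
  shows "(\<Sum>K\<in>Ks q. cc q (card K) * (if \<forall>k\<in>K. Y k then 1 else 0)) mod int q
       = (if card {k. k < B \<and> Y k} mod d q = B mod d q then 0 else 1) mod int q"
proof -
  define N where "N = card {k. k < B \<and> Y k}"
  define Aj where "Aj j = {K. K \<subseteq> {..<B} \<and> card K = j}" for j
  have pr: "prime q" using q P_prime by blast
  obtain t where t: "d q = q ^ t" using d_pow[OF q] by blast
  have dq: "d q > 0" using d_pos[OF q] .
  have Ks: "Ks q = \<Union> (Aj ` {..<d q})" unfolding Ks_def Aj_def by auto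
  have finA: "finite (Aj j)" for j unfolding Aj_def by (rule finite_subset[of _ "Pow {..<B}"]) auto
  have "(\<Sum>K\<in>Ks q. cc q (card K) * (if \<forall>k\<in>K. Y k then 1 else 0))
      = (\<Sum>j\<in>{..<d q}. \<Sum>K\<in>Aj j. cc q (card K) * (if \<forall>k\<in>K. Y k then 1 else 0))"
    unfolding Ks using finA by (intro sum.UNION_disjoint) (auto simp: Aj_def)
  also have "\<dots> = (\<Sum>j\<in>{..<d q}. cc q j * int (N choose j))"
  proof (intro sum.cong refl)
    fix j
    have "(\<Sum>K\<in>Aj j. cc q (card K) * (if \<forall>k\<in>K. Y k then 1 else 0)) = (\<Sum>K\<in>Aj j. cc q j * (if \<forall>k\<in>K. Y k then 1 else 0))"
      by (intro sum.cong refl) (simp add: Aj_def)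
    also have "\<dots> = cc q j * (\<Sum>K\<in>Aj j. (if \<forall>k\<in>K. Y k then 1 else 0))"
      by (simp add: sum_distrib_left)
    also have "\<dots> = cc q j * int (N choose j)"
      unfolding Aj_def N_def count_subsets ..
    finally show "(\<Sum>K\<in>Aj j. cc q (card K) * (if \<forall>k\<in>K. Y k then 1 else 0)) = cc q j * int (N choose j)" .
  qed
  finally have e1: "(\<Sum>K\<in>Ks q. cc q (card K) * (if \<forall>k\<in>K. Y k then 1 else 0)) = (\<Sum>j<d q. cc q j * int (N choose j))" .
  have "(\<Sum>j<d q. cc q j * int (N choose j)) mod int q = (\<Sum>j<d q. cc q j * int ((N mod d q) choose j)) mod int q"
  proof (rule sum_mod_cong)
    fix j assume j: "j \<in> {..<d q}"
    have "(N choose j) mod q = ((N mod q ^ t) choose j) mod q"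
      using choose_mod_period[OF pr, of j t N] j t by simp
    then have "int (N choose j) mod int q = int ((N mod d q) choose j) mod int q"
      using t by (metis of_nat_mod)
    then show "cc q j * int (N choose j) mod int q = cc q j * int ((N mod d q) choose j) mod int q"
      by (metis mod_mult_right_eq)
  qed
  also have "(\<Sum>j<d q. cc q j * int ((N mod d q) choose j)) = (if (N mod d q) mod d q = B mod d q then 0 else 1)"
    using cc_prop[OF q, of "N mod d q"] dq by simp
  finally show ?thesis using e1 N_def by simp
qed

lemma Yv_0: "Yv x 0 i = x (min i (n - 1))"
  unfolding Yv_def by simp

lemma Yv_Suc: "Yv x (Suc l) i = (\<forall>k<B. Yv x l (i * B + k))"
proof
  assume a: "Yv x (Suc l) i"
  show "\<forall>k<B. Yv x l (i * B + k)"
  proof (intro allI impI)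
    fix k assume k: "k < B"
    show "Yv x l (i * B + k)" unfolding Yv_def
    proof (intro allI impI)
      fix u assume u: "u < B ^ l"
      have "k * B ^ l + u < B ^ Suc l"
      proof -
        have "k * B ^ l + u < k * B ^ l + B ^ l" using u by simp
        also have "\<dots> = Suc k * B ^ l" by simp
        also have "\<dots> \<le> B * B ^ l" using k by (intro mult_right_mono) auto
        finally show ?thesis by simp
      qed
      then have xx: "x (min (i * B ^ Suc l + (k * B ^ l + u)) (n - 1))" using a unfolding Yv_def by blast
      have e: "(i * B + k) * B ^ l + u = i * B ^ Suc l + (k * B ^ l + u)"
        by (simp add: algebra_simps)
      show "x (min ((i * B + k) * B ^ l + u) (n - 1))" unfolding e by (rule xx)
    qed
  qed
next
  assume a: "\<forall>k<B. Yv x l (i * B + k)"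
  show "Yv x (Suc l) i" unfolding Yv_def
  proof (intro allI impI)
    fix u assume u: "u < B ^ Suc l"
    define k where "k = u div B ^ l"
    define v where "v = u mod B ^ l"
    have Bl: "B ^ l > 0" using u by (metis gr0I less_nat_zero_code mult_0_right power_Suc)
    have k: "k < B" using u Bl unfolding k_def by (simp add: div_less_iff_less_mult mult.commute)
    have v: "v < B ^ l" using Bl unfolding v_def by simp
    have "x (min ((i * B + k) * B ^ l + v) (n - 1))" using a k v unfolding Yv_def by blast
    moreover have "(i * B + k) * B ^ l + v = i * B ^ Suc l + u"
      unfolding k_def v_def by (simp add: algebra_simps)
    ultimately show "x (min (i * B ^ Suc l + u) (n - 1))" by simp
  qed
qed

lemma d_coprime: "r \<in> P \<Longrightarrow> r' \<in> P \<Longrightarrow> r \<noteq> r' \<Longrightarrow> coprime (d r) (d r')"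
proof -
  assume a: "r \<in> P" "r' \<in> P" "r \<noteq> r'"
  obtain t t' where "d r = r ^ t" "d r' = r' ^ t'" using d_pow a by metis
  moreover have "coprime r r'" using a P_prime primes_coprime by blast
  ultimately show ?thesis by simp
qed

lemma prod_d_dvd: "T \<subseteq> P \<Longrightarrow> (\<forall>r\<in>T. d r dvd z) \<Longrightarrow> (\<Prod>r\<in>T. d r) dvd z"
proof -
  assume T: "T \<subseteq> P"
  have fT: "finite T" using T P_fin finite_subset by blast
  show "(\<forall>r\<in>T. d r dvd z) \<Longrightarrow> (\<Prod>r\<in>T. d r) dvd z"
    using fT T
  proof (induction T rule: finite_induct)
    case empty then show ?case by simp
  next
    case (insert r T)
    have "coprime (d r) (\<Prod>r\<in>T. d r)"
      using insert d_coprime by (intro prod_coprime_right) auto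
    then show ?case using insert by (simp add: divides_mult)
  qed
qed

lemma Lf_char:
  "\<forall>i T. T \<subseteq> P \<longrightarrow> card P \<le> card T + 1 \<longrightarrow> (Yv x l i \<longleftrightarrow> (\<forall>r\<in>T. int r dvd fval m x (Lf l i r)))"
proof (induction l)
  case 0
  show ?case
  proof (intro allI impI)
    fix i T assume T: "T \<subseteq> P" "card P \<le> card T + 1"
    have "T \<noteq> {}" using T P_card by auto
    then obtain r0 where r0: "r0 \<in> T" by blast
    have dv: "int r dvd fval m x (Lf 0 i r) \<longleftrightarrow> x (min i (n - 1))" if r: "r \<in> P" for r
    proof -
      have r2: "r \<ge> 2" using r P_prime prime_ge_2_nat by blast
      have "fval m x (Lf 0 i r) = int (r - 1) + (if x (min i (n - 1)) then 1 else 0)"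
        by (simp add: fval_def lval_def)
      then show ?thesis using r2 by (auto simp: of_nat_diff zdvd_not_zless)
    qed
    show "Yv x 0 i = (\<forall>r\<in>T. int r dvd fval m x (Lf 0 i r))"
      unfolding Yv_0 using dv T(1) r0 by blast
  qed
next
  case (Suc l)
  show ?case
  proof (intro allI impI)
    fix i T assume T: "T \<subseteq> P" "card P \<le> card T + 1"
    define Y where "Y k = Yv x l (i * B + k)" for k
    define N where "N = card {k. k < B \<and> Y k}"
    have val: "fval m x (Lf (Suc l) i r) mod int r = (if N mod d r = B mod d r then 0 else 1) mod int r"
      if r: "r \<in> P" for r
    proof -
      have cT: "card P \<le> card (Tq r) + 1" using r P_fin by (simp add: Tq_def card_Diff_singleton)
      have A: "(\<forall>r'\<in>Tq r. \<forall>k\<in>K. int r' dvd fval m x (Lf l (i * B + k) r')) = (\<forall>k\<in>K. Y k)" for K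
        using Suc.IH Tq_sub cT unfolding Y_def by blast
      show ?thesis unfolding Lf_Suc_mod[OF r] A N_def by (rule poly_part[OF r])
    qed
    have dvr: "int r dvd fval m x (Lf (Suc l) i r) \<longleftrightarrow> N mod d r = B mod d r" if r: "r \<in> P" for r
    proof -
      have r2: "r \<ge> 2" using r P_prime prime_ge_2_nat by blast
      have "int r dvd fval m x (Lf (Suc l) i r) \<longleftrightarrow> fval m x (Lf (Suc l) i r) mod int r = 0" by auto
      also have "\<dots> \<longleftrightarrow> N mod d r = B mod d r" unfolding val[OF r] using r2 by auto
      finally show ?thesis .
    qed
    have NB: "N \<le> B" unfolding N_def
      by (metis (no_types, lifting) card_lessThan card_mono finite_lessThan lessThan_iff mem_Collect_eq subsetI)
    have "(\<forall>r\<in>T. N mod d r = B mod d r) \<longleftrightarrow> N = B"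
    proof
      assume a: "\<forall>r\<in>T. N mod d r = B mod d r"
      have "\<forall>r\<in>T. d r dvd B - N" using a NB by (metis mod_eq_dvd_iff_nat)
      then have "(\<Prod>r\<in>T. d r) dvd B - N" using prod_d_dvd T(1) by blast
      moreover have "B - N < (\<Prod>r\<in>T. d r)" using big[OF T] by simp
      ultimately have "B - N = 0" using nat_dvd_not_less by (metis gr0I)
      then show "N = B" using NB by simp
    qed simp
    also have "N = B \<longleftrightarrow> (\<forall>k<B. Y k)"
    proof
      assume "N = B"
      then have "card {k. k < B \<and> Y k} = card {..<B}" unfolding N_def by simp
      then have "{k. k < B \<and> Y k} = {..<B}" by (intro card_subset_eq) auto
      then show "\<forall>k<B. Y k" by auto
    next
      assume "\<forall>k<B. Y k"
      then have "{k. k < B \<and> Y k} = {..<B}" by auto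
      then show "N = B" unfolding N_def by simp
    qed
    finally show "Yv x (Suc l) i = (\<forall>r\<in>T. int r dvd fval m x (Lf (Suc l) i r))"
      unfolding Yv_Suc Y_def[symmetric] using dvr T(1) by blast
  qed
qed

lemma top_ev: "ev m x (top L) = Yv x L 0"
proof -
  define Pr where "Pr = (\<lambda>v::int. \<forall>r\<in>P. v mod int r = 0)"
  have inv: "Pr v = Pr (v mod int m)" for v
  proof -
    have "v mod int m mod int r = v mod int r" if "r \<in> P" for r
      using P_dvd[OF that] by (intro mod_mod_cancel) auto
    then show ?thesis unfolding Pr_def by auto
  qed
  define F where "F r = fval m x (Lf L 0 r)" for r
  have ev0: "ev m x (top L) = Pr (fval m x (fsum (map (\<lambda>r. scale (w P r) (Lf L 0 r)) (sorted_list_of_set P))))"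
    unfolding top_def Pr_def[symmetric] by (rule ev_gateF[OF m_pos]) (rule inv)
  have fv: "fval m x (fsum (map (\<lambda>r. scale (w P r) (Lf L 0 r)) (sorted_list_of_set P))) = (\<Sum>r\<in>P. int (w P r) * F r)"
    unfolding fval_fsum F_def using P_fin by (simp add: fval_scale comp_def sum_list_distinct_conv_sum_set)
  have red: "(\<Sum>r'\<in>P. int (w P r') * F r') mod int r = (int (w P r) * F r) mod int r" if r: "r \<in> P" for r
  proof -
    have "(\<Sum>r'\<in>P. int (w P r') * F r') = int (w P r) * F r + (\<Sum>r'\<in>P - {r}. int (w P r') * F r')"
      using P_fin r by (simp add: sum.remove)
    moreover have "int r dvd (\<Sum>r'\<in>P - {r}. int (w P r') * F r')"
      using w_dvd[OF subset_refl r] by (intro dvd_sum) auto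
    ultimately show ?thesis using add_dvd_mod_int by simp
  qed
  have eq: "((int (w P r) * F r) mod int r = 0) = (int r dvd F r)" if r: "r \<in> P" for r
  proof -
    have "((int (w P r) * F r) mod int r = (int (w P r) * 0) mod int r) = (F r mod int r = 0 mod int r)"
      using cong_mult_lcancel[OF w_coprime[OF subset_refl r], of "F r" 0] unfolding cong_def .
    then show ?thesis by auto
  qed
  have "ev m x (top L) = (\<forall>r\<in>P. int r dvd F r)"
    unfolding ev0 fv Pr_def using red eq by simp
  also have "\<dots> = Yv x L 0"
  proof -
    have "card P \<le> card P + 1" by simp
    then show ?thesis using Lf_char[where l=L and x=x] unfolding F_def by blast
  qed
  finally show ?thesis .
qed

lemma Yv_all: "n \<le> B ^ L \<Longrightarrow> Yv x L 0 = (\<forall>j<n. x j)"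
proof
  assume a: "n \<le> B ^ L" "Yv x L 0"
  show "\<forall>j<n. x j"
  proof (intro allI impI)
    fix j assume "j < n"
    then show "x j" using a unfolding Yv_def by (metis add_0 min.absorb1 mult_0 le_diff_conv2 less_le_trans Suc_leI n_pos le_add_diff_inverse2 less_Suc_eq_le add.commute plus_1_eq_Suc)
  qed
next
  assume "\<forall>j<n. x j"
  then show "Yv x L 0" unfolding Yv_def using n_pos by (simp add: min_def)
qed

lemma set_scale: "set (fst (scale k f)) \<subseteq> set (fst f)"
  by (auto simp: scale_def)

lemma set_scale_mem: "e \<in> set (fst (scale k f)) \<Longrightarrow> e \<in> set (fst f)"
  using set_scale by blast

lemma set_fsum: "set (fst (fsum fs)) = (\<Union>f\<in>set fs. set (fst f))"
  by (auto simp: fsum_def)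

lemma set_wform: "set (fst (wform q ces)) \<subseteq> fst ` set ces"
  by (auto simp: wform_def split: prod.splits) (metis empty_iff fst_conv image_eqI replicate_eq_replicate set_replicate)

lemma foldr_max_le: "(\<forall>e\<in>set es. dep e \<le> l) \<Longrightarrow> foldr max (map dep es) 0 \<le> l"
  by (induction es) auto

lemma set_comb: "T \<subseteq> P \<Longrightarrow> finite K \<Longrightarrow> e \<in> set (fst (comb F i T K \<sigma>)) \<Longrightarrow>
   \<exists>r\<in>T. \<exists>k\<in>K. e \<in> set (fst (F (i * B + k) r))"
proof -
  assume a: "T \<subseteq> P" "finite K" "e \<in> set (fst (comb F i T K \<sigma>))"
  have fT: "finite T" using a(1) P_fin finite_subset by blast
  show ?thesis using a(3) fT a(2) unfolding comb_def set_fsum by (auto dest!: set_scale_mem)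
qed

lemma Lf_ok: "\<forall>i r. \<forall>e\<in>set (fst (Lf l i r)). dep e \<le> l \<and> vars e \<subseteq> {..<n}"
proof (induction l)
  case 0
  then show ?case using n_pos by auto
next
  case (Suc l)
  show ?case
  proof (intro allI ballI)
    fix i q e assume e: "e \<in> set (fst (Lf (Suc l) i q))"
    then obtain K \<sigma> where K: "K \<in> set (enum (Ks q))" and e': "e = gateF m (cnd (Tq q) \<sigma>) (comb (Lf l) i (Tq q) K \<sigma>)"
      using set_wform by (fastforce simp: Lf.simps)
    have Kf: "finite K" using K enum[OF Ks_fin] Ks_fin2 by blast
    have ch: "\<forall>c\<in>set (fst (comb (Lf l) i (Tq q) K \<sigma>)). dep c \<le> l \<and> vars c \<subseteq> {..<n}"
      using set_comb[OF Tq_sub Kf] Suc.IH by blast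
    show "dep e \<le> Suc l \<and> vars e \<subseteq> {..<n}"
      unfolding e' gateF_def using ch foldr_max_le by auto
  qed
qed

lemma top_ok: "isG (top L) \<and> dep (top L) \<le> Suc L \<and> vars (top L) \<subseteq> {..<n}"
proof -
  have "\<forall>c\<in>set (fst (fsum (map (\<lambda>r. scale (w P r) (Lf L 0 r)) (sorted_list_of_set P)))). dep c \<le> L \<and> vars c \<subseteq> {..<n}"
    unfolding set_fsum using Lf_ok[of L] by (auto dest!: set_scale_mem)
  then show ?thesis unfolding top_def gateF_def using foldr_max_le by auto
qed

definition fsz :: "form \<Rightarrow> nat" where "fsz f = (\<Sum>e\<leftarrow>fst f. sz e)"

lemma fsz_scale: "fsz (scale k f) = k * fsz f"
  unfolding fsz_def scale_def by (induction k) (auto simp: sum_list_concat_map)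

lemma fsz_fsum: "fsz (fsum fs) = (\<Sum>f\<leftarrow>fs. fsz f)"
  unfolding fsz_def fsum_def by (induction fs) auto

lemma sz_gateF: "sz (gateF m' Pr f) = Suc (fsz f)"
  unfolding fsz_def gateF_def by simp

lemma fsz_wform: "q > 0 \<Longrightarrow> fsz (wform q ces) \<le> q * (\<Sum>(e,c)\<leftarrow>ces. sz e)"
proof (induction ces)
  case Nil then show ?case by (simp add: fsz_def wform_def)
next
  case (Cons ec ces)
  obtain e c where ec: "ec = (e, c)" by force
  have "c mod int q < int q" using Cons.prems by simp
  then have "nat (c mod int q) \<le> q" by (simp add: nat_le_iff)
  then have "nat (c mod int q) * sz e \<le> q * sz e" by (rule mult_right_mono) simp
  moreover have "fsz (wform q (ec # ces)) = nat (c mod int q) * sz e + fsz (wform q ces)"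
    by (simp add: fsz_def wform_def ec sum_list_replicate)
  moreover have "fsz (wform q ces) \<le> q * (\<Sum>(e,c)\<leftarrow>ces. sz e)" using Cons by simp
  ultimately have "fsz (wform q (ec # ces)) \<le> q * sz e + q * (\<Sum>(e,c)\<leftarrow>ces. sz e)" by linarith
  then show ?case by (simp add: ec algebra_simps)
qed

definition Dm :: nat where "Dm = Max (d ` P)"
definition W0 :: nat where "W0 = \<Prod>P"
definition Qc :: nat where "Qc = m * (Dm * B ^ Dm) * (2 * m ^ Dm) ^ card P * (card P * Dm * W0 * m)"

primrec Zb :: "nat \<Rightarrow> nat" where
  "Zb 0 = 0"
| "Zb (Suc l) = Qc * (1 + Zb l)"

lemma d_le: "r \<in> P \<Longrightarrow> d r \<le> Dm"
  unfolding Dm_def using P_fin by simp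

lemma r_le_m: "r \<in> P \<Longrightarrow> r \<le> m"
  using P_dvd m_pos dvd_imp_le by blast

lemma W0_pos: "W0 > 0"
  unfolding W0_def using P_prime P_fin prime_gt_0_nat by (simp add: prod_pos)

lemma w_le: "T \<subseteq> P \<Longrightarrow> w T r \<le> W0"
proof -
  assume T: "T \<subseteq> P"
  have "\<Prod>(T - {r}) dvd \<Prod>P" using T P_fin by (intro prod_dvd_prod_subset) auto
  then show ?thesis unfolding w_def W0_def using W0_pos W0_def dvd_imp_le by auto
qed

lemma Dm_pos: "Dm \<ge> 1"
proof -
  obtain r where "r \<in> P" using P_card by fastforce
  then show ?thesis using d_le d_pos by fastforce
qed

lemma Qc_pos: "Qc \<ge> 1"
proof -
  have "card P \<ge> 1" using P_card by simp
  then show ?thesis unfolding Qc_def using m_pos Dm_pos B_pos W0_pos by (simp add: Suc_le_eq)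
qed

lemma fsz_comb:
  assumes T: "T \<subseteq> P" and K: "finite K" and \<sigma>: "\<sigma> \<in> Sig T K"
    and Z: "\<And>r k. r \<in> T \<Longrightarrow> k \<in> K \<Longrightarrow> fsz (F (i * B + k) r) \<le> Z"
  shows "fsz (comb F i T K \<sigma>) \<le> card T * card K * (W0 * m * Z)"
proof -
  have fT: "finite T" using T P_fin finite_subset by blast
  have "fsz (comb F i T K \<sigma>) = (\<Sum>r\<in>T. \<Sum>k\<in>K. (w T r * fst (\<sigma> r) k) * fsz (F (i * B + k) r))"
    unfolding comb_def fsz_fsum using fT K
    by (simp add: sum_list_concat_map fsz_scale comp_def sum_list_distinct_conv_sum_set)
  also have "\<dots> \<le> (\<Sum>r\<in>T. \<Sum>k\<in>K. W0 * m * Z)"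
  proof (intro sum_mono)
    fix r k assume r: "r \<in> T" and k: "k \<in> K"
    have "fst (\<sigma> r) k < r" using \<sigma> r k unfolding Sig_def by (auto simp: PiE_def Pi_def)
    then have "fst (\<sigma> r) k \<le> m" using r_le_m[of r] r T by auto
    moreover have "w T r \<le> W0" using w_le T by blast
    ultimately have h: "w T r * fst (\<sigma> r) k \<le> W0 * m" by (intro mult_le_mono) auto
    show "(w T r * fst (\<sigma> r) k) * fsz (F (i * B + k) r) \<le> W0 * m * Z"
      by (rule mult_le_mono[OF h Z[OF r k]])
  qed
  also have "\<dots> = card T * card K * (W0 * m * Z)" by simp
  finally show ?thesis .
qed

lemma card_Sig: "T \<subseteq> P \<Longrightarrow> finite K \<Longrightarrow> card K \<le> Dm \<Longrightarrow> card (Sig T K) \<le> (2 * m ^ Dm) ^ card P"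
proof -
  assume T: "T \<subseteq> P" and K: "finite K" and cK: "card K \<le> Dm"
  have fT: "finite T" using T P_fin finite_subset by blast
  have "card (Sig T K) = (\<Prod>r\<in>T. r ^ card K * 2)"
    unfolding Sig_def using fT K by (simp add: card_PiE card_cartesian_product mult_2_right)
  also have "\<dots> \<le> (2 * m ^ Dm) ^ card P"
  proof (rule prod_le_power)
    fix r assume r: "r \<in> T"
    have "r \<le> m" "r \<ge> 1" using r_le_m[of r] r T P_prime prime_ge_1_nat by auto
    then have "r ^ card K \<le> m ^ card K" by (intro power_mono) auto
    also have "\<dots> \<le> m ^ Dm" using cK m_pos by (intro power_increasing) auto
    finally have "r ^ card K \<le> m ^ Dm" .
    then show "0 \<le> r ^ card K * 2 \<and> r ^ card K * 2 \<le> 2 * m ^ Dm" by simp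
  next
    show "card T \<le> card P" using T P_fin by (simp add: card_mono)
  next
    show "1 \<le> 2 * m ^ Dm" using m_pos by simp
  qed
  finally show ?thesis .
qed

lemma card_Ks: "q \<in> P \<Longrightarrow> card (Ks q) \<le> Dm * B ^ Dm"
proof -
  assume q: "q \<in> P"
  define Aj where "Aj j = {K. K \<subseteq> {..<B} \<and> card K = j}" for j
  have "Ks q = (\<Union>j\<in>{..<d q}. Aj j)" unfolding Ks_def Aj_def by auto
  then have "card (Ks q) \<le> (\<Sum>j<d q. card (Aj j))" using card_UN_le[of "{..<d q}" Aj] by simp
  also have "\<dots> \<le> (\<Sum>j<d q. B ^ Dm)"
  proof (intro sum_mono)
    fix j assume j: "j \<in> {..<d q}"
    have "card (Aj j) = B choose j" unfolding Aj_def using n_subsets[of "{..<B}" j] by simp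
    also have "\<dots> \<le> B ^ j"
      by (cases "j \<le> B") (auto simp: binomial_le_pow binomial_eq_0)
    also have "\<dots> \<le> B ^ Dm" using j d_le[OF q] B_pos by (intro power_increasing) auto
    finally show "card (Aj j) \<le> B ^ Dm" .
  qed
  also have "\<dots> \<le> Dm * B ^ Dm" using d_le[OF q] by simp
  finally show ?thesis .
qed

lemma Lf_sz: "\<forall>i q. q \<in> P \<longrightarrow> fsz (Lf l i q) \<le> Zb l"
proof (induction l)
  case 0
  then show ?case by (simp add: fsz_def)
next
  case (Suc l)
  show ?case
  proof (intro allI impI)
    fix i q assume q: "q \<in> P"
    have q0: "q > 0" using q P_prime prime_gt_0_nat by blast
    define b where "b = card P * Dm * (W0 * m)"
    have b1: "b \<ge> 1" unfolding b_def using P_card Dm_pos W0_pos m_pos by (simp add: Suc_le_eq)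
    define gt where "gt K \<sigma> = gateF m (cnd (Tq q) \<sigma>) (comb (Lf l) i (Tq q) K \<sigma>)" for K \<sigma>
    define ces where "ces = concat (map (\<lambda>K. map (\<lambda>\<sigma>.
      (gt K \<sigma>, cc q (card K) * ivs q K * sgn (Tq q) \<sigma>)) (enum (Sig (Tq q) K))) (enum (Ks q)))"
    have "Lf (Suc l) i q = wform q ces" unfolding ces_def gt_def by simp
    then have "fsz (Lf (Suc l) i q) \<le> q * (\<Sum>(e,c)\<leftarrow>ces. sz e)" using fsz_wform[OF q0] by simp
    also have "(\<Sum>(e,c)\<leftarrow>ces. sz e) = (\<Sum>K\<leftarrow>enum (Ks q). \<Sum>\<sigma>\<leftarrow>enum (Sig (Tq q) K). sz (gt K \<sigma>))"
      unfolding ces_def sum_list_concat_map by (simp add: comp_def)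
    finally have "fsz (Lf (Suc l) i q) \<le> q * (\<Sum>K\<leftarrow>enum (Ks q). \<Sum>\<sigma>\<leftarrow>enum (Sig (Tq q) K). sz (gt K \<sigma>))" .
    also have "(\<Sum>K\<leftarrow>enum (Ks q). \<Sum>\<sigma>\<leftarrow>enum (Sig (Tq q) K). sz (gt K \<sigma>))
        = (\<Sum>K\<in>Ks q. \<Sum>\<sigma>\<in>Sig (Tq q) K. sz (gt K \<sigma>))"
      using Ks_fin Sig_fin[OF Tq_sub] Ks_fin2 by (simp add: sum_list_enum cong: sum.cong)
    also have "\<dots> \<le> (\<Sum>K\<in>Ks q. \<Sum>\<sigma>\<in>Sig (Tq q) K. 1 + b * Zb l)"
    proof (intro sum_mono)
      fix K \<sigma> assume K: "K \<in> Ks q" and \<sigma>: "\<sigma> \<in> Sig (Tq q) K"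
      have Kf: "finite K" using Ks_fin2[OF K] .
      have cK: "card K \<le> Dm" using K d_le[OF q] unfolding Ks_def by auto
      have cT: "card (Tq q) \<le> card P" using P_fin Tq_sub by (simp add: card_mono)
      have "fsz (comb (Lf l) i (Tq q) K \<sigma>) \<le> card (Tq q) * card K * (W0 * m * Zb l)"
        using Tq_sub Suc.IH by (intro fsz_comb[OF Tq_sub Kf \<sigma>]) blast
      also have "\<dots> \<le> card P * Dm * (W0 * m * Zb l)" using cT cK by (intro mult_le_mono) auto
      also have "\<dots> = b * Zb l" by (simp add: b_def)
      finally show "sz (gt K \<sigma>) \<le> 1 + b * Zb l" unfolding gt_def sz_gateF by simp
    qed
    also have "\<dots> = (\<Sum>K\<in>Ks q. card (Sig (Tq q) K) * (1 + b * Zb l))" by simp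
    also have "\<dots> \<le> (\<Sum>K\<in>Ks q. (2 * m ^ Dm) ^ card P * (1 + b * Zb l))"
    proof (intro sum_mono mult_le_mono order.refl)
      fix K assume K: "K \<in> Ks q"
      have cK: "card K \<le> Dm" using K d_le[OF q] unfolding Ks_def by auto
      show "card (Sig (Tq q) K) \<le> (2 * m ^ Dm) ^ card P" using card_Sig[OF Tq_sub Ks_fin2[OF K] cK] .
    qed
    also have "\<dots> = card (Ks q) * ((2 * m ^ Dm) ^ card P * (1 + b * Zb l))" by simp
    also have "\<dots> \<le> (Dm * B ^ Dm) * ((2 * m ^ Dm) ^ card P * (b * (1 + Zb l)))"
    proof (intro mult_le_mono card_Ks[OF q] order.refl)
      show "1 + b * Zb l \<le> b * (1 + Zb l)" using b1 by (simp add: algebra_simps)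
    qed
    finally have "fsz (Lf (Suc l) i q) \<le> q * ((Dm * B ^ Dm) * ((2 * m ^ Dm) ^ card P * (b * (1 + Zb l))))"
      by (simp add: mult_le_mono)
    also have "\<dots> \<le> m * ((Dm * B ^ Dm) * ((2 * m ^ Dm) ^ card P * (b * (1 + Zb l))))"
      using r_le_m[OF q] by (intro mult_le_mono) auto
    also have "\<dots> = Zb (Suc l)" by (simp add: Qc_def b_def algebra_simps)
    finally show "fsz (Lf (Suc l) i q) \<le> Zb (Suc l)" .
  qed
qed

lemma Zb_bound: "1 + Zb l \<le> (2 * Qc) ^ l"
proof (induction l)
  case 0 then show ?case by simp
next
  case (Suc l)
  have "1 + Zb (Suc l) = 1 + Qc * (1 + Zb l)" by simp
  also have "\<dots> \<le> 2 * Qc * (1 + Zb l)" using Qc_pos by (simp add: algebra_simps)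
  also have "\<dots> \<le> 2 * Qc * (2 * Qc) ^ l" using Suc by (intro mult_le_mono) auto
  finally show ?case by simp
qed

lemma top_sz: "sz (top L) \<le> card P * W0 * (2 * Qc) ^ L"
proof -
  have "sz (top L) = Suc (\<Sum>r\<in>P. w P r * fsz (Lf L 0 r))"
    unfolding top_def sz_gateF fsz_fsum using P_fin
    by (simp add: fsz_scale comp_def sum_list_distinct_conv_sum_set)
  also have "\<dots> \<le> Suc (\<Sum>r\<in>P. W0 * Zb L)"
    using w_le[OF subset_refl] Lf_sz[of L] by (intro Suc_le_mono[THEN iffD2] sum_mono mult_le_mono) auto
  also have "\<dots> = 1 + card P * W0 * Zb L" by simp
  also have "\<dots> \<le> card P * W0 * (1 + Zb L)"
    using P_card W0_pos by (simp add: algebra_simps Suc_le_eq)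
  also have "\<dots> \<le> card P * W0 * (2 * Qc) ^ L" using Zb_bound by (intro mult_le_mono) auto
  finally show ?thesis .
qed

lemma circuit_exists:
  assumes "n \<le> B ^ L"
  shows "\<exists>C. CC_circuit (Suc L) m n C \<and> computes_AND m n C \<and> circ_size C = sz (top L)"
proof -
  define C where "C = cmpl m (top L)"
  have ok: "isG (top L)" "dep (top L) \<le> Suc L" "vars (top L) \<subseteq> {..<n}" using top_ok by auto
  note cc = comp_correct[OF m_pos ok(1) ok(3)]
  have "CC_circuit (Suc L) m n C" unfolding CC_circuit_def C_def using cc(1) cc(3)[of] ok(2) by (meson le_trans)
  moreover have "computes_AND m n C" unfolding computes_AND_def C_def
    using cc(2) top_ev Yv_all[OF assms] by simp
  moreover have "circ_size C = sz (top L)" unfolding C_def using cc(4) .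
  ultimately show ?thesis by blast
qed

lemma pw_mono: "1 \<le> (X::nat) \<Longrightarrow> a \<le> X ^ i \<Longrightarrow> i \<le> j \<Longrightarrow> a \<le> X ^ j"
  by (meson le_trans power_increasing)

lemma pw_mult: "a \<le> (X::nat) ^ i \<Longrightarrow> b \<le> X ^ j \<Longrightarrow> a * b \<le> X ^ (i + j)"
  by (simp add: mult_le_mono power_add)

lemma pw_pow: "a \<le> (X::nat) ^ i \<Longrightarrow> a ^ k \<le> X ^ (i * k)"
  by (metis power_mono power_mult zero_le)

end


context cons begin
lemma top_bound:
  assumes s: "1 \<le> s" and Dm: "Dm \<le> m * s" and B: "B \<le> (m * s) ^ card P" and cP: "card P \<le> m"
  shows "sz (top L) \<le> (m * s) ^ ((1 + card P + L + (2 * card P * m + 2 * card P + 5) * L) * s)"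
proof -
  define X where "X = m * s"
  define w where "w = card P"
  have X1: "1 \<le> X" unfolding X_def using s m_pos by simp
  have X2: "2 \<le> X"
  proof -
    have "0 < card P" using P_card by simp
    then have "P \<noteq> {}" by (simp add: card_gt_0_iff)
    then obtain r where r: "r \<in> P" by blast
    have "2 \<le> r" using prime_ge_2_nat[OF P_prime[OF r]] .
    moreover have "r \<le> m" using r_le_m[OF r] .
    ultimately have "2 \<le> m" by linarith
    moreover have "m * 1 \<le> m * s" using s by (rule mult_le_mono2)
    ultimately show ?thesis unfolding X_def by linarith
  qed
  have mX: "m \<le> X ^ 1" unfolding X_def using s by simp
  have sX: "s \<le> X" unfolding X_def using m_pos by simp
  have wX: "w \<le> X ^ 1" unfolding w_def using cP mX by simp
  have DX: "Dm \<le> X ^ 1" using Dm X_def by simp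
  have W0X: "W0 \<le> X ^ w"
  proof -
    have "W0 \<le> m ^ w" unfolding W0_def w_def using r_le_m m_pos by (intro prod_le_power) auto
    also have "\<dots> \<le> X ^ w" using mX by (intro power_mono) auto
    finally show ?thesis .
  qed
  have BD: "B ^ Dm \<le> X ^ (w * (m * s))"
  proof -
    have "B ^ Dm \<le> X ^ (w * Dm)" using pw_pow[of B X w Dm] B unfolding X_def w_def by simp
    moreover have "w * Dm \<le> w * (m * s)" using Dm by simp
    ultimately show ?thesis by (rule pw_mono[OF X1])
  qed
  have mD: "m ^ Dm \<le> X ^ (m * s)"
  proof -
    have "m ^ Dm \<le> X ^ (1 * Dm)" by (rule pw_pow[OF mX])
    moreover have "1 * Dm \<le> m * s" using Dm by simp
    ultimately show ?thesis by (rule pw_mono[OF X1])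
  qed
  have two: "2 \<le> X ^ 1" using X2 by simp
  have t1: "2 * m ^ Dm \<le> X ^ (1 + m * s)" by (rule pw_mult[OF two mD])
  have t2: "(2 * m ^ Dm) ^ w \<le> X ^ ((1 + m * s) * w)" by (rule pw_pow[OF t1])
  have t3: "w * Dm * W0 * m \<le> X ^ (1 + 1 + w + 1)"
    by (rule pw_mult[OF pw_mult[OF pw_mult[OF wX DX] W0X] mX])
  have t4: "Dm * B ^ Dm \<le> X ^ (1 + w * (m * s))" by (rule pw_mult[OF DX BD])
  have Qc: "Qc \<le> X ^ (1 + (1 + w * (m * s)) + (1 + m * s) * w + (1 + 1 + w + 1))"
    unfolding Qc_def w_def[symmetric] by (rule pw_mult[OF pw_mult[OF pw_mult[OF mX t4] t2] t3])
  define c1 where "c1 = 2 * w * m + 2 * w + 5"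
  have "1 + (1 + w * (m * s)) + (1 + m * s) * w + (1 + 1 + w + 1) = 2 * w * m * s + 2 * w + 5"
    by (simp add: algebra_simps)
  also have "\<dots> \<le> c1 * s"
  proof -
    have "(2 * w + 5) * 1 \<le> (2 * w + 5) * s" by (rule mult_le_mono2[OF s])
    then show ?thesis unfolding c1_def by (simp add: algebra_simps)
  qed
  finally have Qc2: "Qc \<le> X ^ (c1 * s)" by (rule pw_mono[OF X1 Qc])
  have "2 * Qc \<le> X ^ (1 + c1 * s)" by (rule pw_mult[OF two Qc2])
  then have q3: "(2 * Qc) ^ L \<le> X ^ ((1 + c1 * s) * L)" by (rule pw_pow)
  have "sz (top L) \<le> w * W0 * (2 * Qc) ^ L" using top_sz w_def by simp
  also have "\<dots> \<le> X ^ (1 + w + (1 + c1 * s) * L)" by (rule pw_mult[OF pw_mult[OF wX W0X] q3])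
  also have "\<dots> \<le> X ^ ((1 + w + L + c1 * L) * s)"
  proof (rule power_increasing[OF _ X1])
    have "1 + w + (1 + c1 * s) * L = 1 + w + L + c1 * L * s" by (simp add: algebra_simps)
    also have "\<dots> \<le> (1 + w + L + c1 * L) * s"
    proof -
      have "(1 + w + L) * 1 \<le> (1 + w + L) * s" by (rule mult_le_mono2[OF s])
      then show ?thesis by (simp add: algebra_simps)
    qed
    finally show "1 + w + (1 + c1 * s) * L \<le> (1 + w + L + c1 * L) * s" .
  qed
  finally show ?thesis unfolding X_def w_def c1_def .
qed

end


definition dd :: "nat \<Rightarrow> nat \<Rightarrow> nat" where
  "dd s r = r ^ (LEAST t. s \<le> r ^ t)"

definition gg :: "nat \<Rightarrow> nat \<Rightarrow> nat \<Rightarrow> nat \<Rightarrow> int" where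
  "gg s B r N = (if N mod dd s r = B mod dd s r then 0 else 1)"

definition ccf :: "nat \<Rightarrow> nat \<Rightarrow> nat \<Rightarrow> nat \<Rightarrow> int" where
  "ccf s B r = (SOME c. \<forall>N < dd s r. gg s B r N = (\<Sum>j<dd s r. c j * int (N choose j)))"

lemma dd_ex: fixes s r :: nat shows "2 \<le> r \<Longrightarrow> \<exists>t. s \<le> r ^ t"
proof -
  assume r: "2 \<le> r"
  have "s < 2 ^ s" by (rule less_exp)
  also have "\<dots> \<le> r ^ s" using r by (rule power_mono) simp
  finally show ?thesis by (intro exI[of _ s]) simp
qed

lemma dd_ge: "2 \<le> r \<Longrightarrow> s \<le> dd s r"
  unfolding dd_def using dd_ex by (rule LeastI_ex)

lemma dd_le: "2 \<le> r \<Longrightarrow> 1 \<le> s \<Longrightarrow> dd s r \<le> r * s"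
proof -
  assume r: "2 \<le> r" and s: "1 \<le> s"
  define t where "t = (LEAST t. s \<le> r ^ t)"
  show ?thesis
  proof (cases t)
    case 0
    then show ?thesis unfolding dd_def t_def[symmetric] using r s by (simp add: Suc_le_eq)
  next
    case (Suc t')
    have "\<not> s \<le> r ^ t'" unfolding t_def using Suc t_def by (metis lessI not_less_Least)
    then have "r ^ t' \<le> s" by simp
    then have "r * r ^ t' \<le> r * s" by simp
    then show ?thesis unfolding dd_def t_def[symmetric] Suc by simp
  qed
qed

lemma ccf_prop: "0 < dd s r \<Longrightarrow> N < dd s r \<Longrightarrow> gg s B r N = (\<Sum>j<dd s r. ccf s B r j * int (N choose j))"
proof -
  assume "N < dd s r"
  have "\<exists>c. \<forall>N < dd s r. gg s B r N = (\<Sum>j<dd s r. c j * int (N choose j))" by (rule interp_exists)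
  then have "\<forall>N < dd s r. gg s B r N = (\<Sum>j<dd s r. ccf s B r j * int (N choose j))"
    unfolding ccf_def by (rule someI_ex)
  then show ?thesis using \<open>N < dd s r\<close> by blast
qed

lemma inst:
  fixes m n s :: nat
  assumes m: "1 \<le> m" and om: "2 \<le> omega m" and n: "1 \<le> n" and s: "2 \<le> s"
  defines "B \<equiv> s ^ (omega m - 1) - 1"
  shows "cons m n B (prime_factors m) (dd s) (ccf s B)"
proof
  show "0 < m" using m by simp
  show "\<And>p. p \<in> prime_factors m \<Longrightarrow> prime p \<and> p dvd m" by (simp add: in_prime_factors_iff)
  show "finite (prime_factors m)" by simp
  show "2 \<le> card (prime_factors m)" using om by (simp add: omega_def)
  show "1 \<le> n" using n .
  show "\<And>r. r \<in> prime_factors m \<Longrightarrow> \<exists>t. dd s r = r ^ t" unfolding dd_def by blast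
  show "\<And>r N. r \<in> prime_factors m \<Longrightarrow> N < dd s r \<Longrightarrow>
       (if N mod dd s r = B mod dd s r then 0 else 1) = (\<Sum>j<dd s r. ccf s B r j * int (N choose j))"
  proof -
    fix r N assume r: "r \<in> prime_factors m" and N: "N < dd s r"
    have "0 < dd s r" using N by simp
    then show "(if N mod dd s r = B mod dd s r then 0 else 1) = (\<Sum>j<dd s r. ccf s B r j * int (N choose j))"
      using ccf_prop[OF _ N] unfolding gg_def by simp
  qed
  have sw: "2 \<le> s ^ (omega m - 1)"
  proof -
    have "s ^ 1 \<le> s ^ (omega m - 1)" using om s by (intro power_increasing) auto
    then show ?thesis using s by simp
  qed
  show "1 \<le> B" unfolding B_def using sw by simp
  show "\<And>T. T \<subseteq> prime_factors m \<Longrightarrow> card (prime_factors m) \<le> card T + 1 \<Longrightarrow> B < (\<Prod>r\<in>T. dd s r)"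
  proof -
    fix T assume T: "T \<subseteq> prime_factors m" "card (prime_factors m) \<le> card T + 1"
    have fT: "finite T" using T(1) finite_subset by blast
    have "B < s ^ (omega m - 1)" unfolding B_def using sw by simp
    also have "\<dots> \<le> s ^ card T" using T(2) s by (intro power_increasing) (auto simp: omega_def)
    also have "\<dots> = (\<Prod>r\<in>T. s)" by simp
    also have "\<dots> \<le> (\<Prod>r\<in>T. dd s r)"
    proof (rule prod_mono)
      fix r assume "r \<in> T"
      then have "prime r" using T(1) by (simp add: in_prime_factors_iff subset_iff)
      then show "0 \<le> s \<and> s \<le> dd s r" using dd_ge prime_ge_2_nat by blast
    qed
    finally show "B < (\<Prod>r\<in>T. dd s r)" .
  qed
qed

lemma card_pf_le: "1 \<le> m \<Longrightarrow> card (prime_factors m) \<le> m"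
proof -
  assume m: "1 \<le> m"
  have "prime_factors m \<subseteq> {1..m}"
    using m by (auto simp: in_prime_factors_iff dvd_imp_le prime_gt_0_nat Suc_leI)
  then have "card (prime_factors m) \<le> card {1..m}" by (intro card_mono) auto
  then show ?thesis by simp
qed

lemma main_nat:
  fixes m n s L :: nat
  assumes m: "1 \<le> m" and om: "2 \<le> omega m" and n: "1 \<le> n" and s: "2 \<le> s"
    and nB: "n \<le> (s ^ (omega m - 1) - 1) ^ L"
  shows "\<exists>C. CC_circuit (Suc L) m n C \<and> computes_AND m n C \<and>
     circ_size C \<le> (m * s) ^ ((1 + omega m + L + (2 * omega m * m + 2 * omega m + 5) * L) * s)"
proof -
  define B where "B = s ^ (omega m - 1) - 1"
  interpret cons m n B "prime_factors m" "dd s" "ccf s B"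
    unfolding B_def by (rule inst[OF m om n s])
  obtain C where C: "CC_circuit (Suc L) m n C" "computes_AND m n C" "circ_size C = sz (top L)"
    using circuit_exists nB B_def by blast
  have Dm: "Dm \<le> m * s"
    unfolding Dm_def
  proof (subst Max_le_iff)
    show "finite (dd s ` prime_factors m)" by simp
    show "dd s ` prime_factors m \<noteq> {}" using P_card by auto
    show "\<forall>a\<in>dd s ` prime_factors m. a \<le> m * s"
    proof
      fix a assume "a \<in> dd s ` prime_factors m"
      then obtain r where r: "r \<in> prime_factors m" "a = dd s r" by blast
      have "dd s r \<le> r * s" using dd_le r P_prime prime_ge_2_nat s by fastforce
      also have "\<dots> \<le> m * s" using r_le_m[OF r(1)] by simp
      finally show "a \<le> m * s" using r by simp
    qed
  qed
  have Bb: "B \<le> (m * s) ^ card (prime_factors m)"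
  proof -
    have "B \<le> s ^ (omega m - 1)" unfolding B_def by simp
    also have "\<dots> \<le> (m * s) ^ (omega m - 1)" using m by (intro power_mono) auto
    also have "\<dots> \<le> (m * s) ^ card (prime_factors m)" using m s
      by (intro power_increasing) (auto simp: omega_def)
    finally show ?thesis .
  qed
  have cP: "card (prime_factors m) \<le> m" by (rule card_pf_le[OF m])
  have "sz (top L) \<le> (m * s) ^ ((1 + card (prime_factors m) + L + (2 * card (prime_factors m) * m + 2 * card (prime_factors m) + 5) * L) * s)"
    using top_bound[OF _ Dm Bb cP] s by simp
  then show ?thesis using C by (auto simp: omega_def)
qed


lemma real_bound:
  fixes X K s n :: nat and y Dr :: real
  assumes X: "1 \<le> X" "real X \<le> real n ^ 2" and s: "real s \<le> 4 * y" and y: "y \<le> real n powr (1 / Dr)"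
    and n: "1 \<le> n"
  shows "real (X ^ (K * s)) \<le> 2 powr ((8 * real K / ln 2) * real n powr (1 / Dr) * ln (real n))"
proof -
  have Xp: "0 < real X" using X by simp
  have lnX: "ln (real X) \<le> 2 * ln (real n)"
  proof -
    have "ln (real X) \<le> ln (real n ^ 2)" using X Xp n by (subst ln_le_cancel_iff) auto
    also have "\<dots> = 2 * ln (real n)" using n by (simp add: ln_realpow)
    finally show ?thesis .
  qed
  have lnX0: "0 \<le> ln (real X)" using X by simp
  have lnn0: "0 \<le> ln (real n)" using n by simp
  have ks: "real (K * s) \<le> 4 * real K * real n powr (1 / Dr)"
  proof -
    have "real (K * s) = real K * real s" by simp
    also have "\<dots> \<le> real K * (4 * real n powr (1 / Dr))"
      using s y by (intro mult_left_mono) auto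
    finally show ?thesis by simp
  qed
  have "real (X ^ (K * s)) = real X powr real (K * s)"
    using powr_realpow[OF Xp, of "K * s"] by simp
  also have "\<dots> = exp (real (K * s) * ln (real X))"
    using Xp by (simp add: powr_def)
  also have "\<dots> \<le> exp ((4 * real K * real n powr (1 / Dr)) * (2 * ln (real n)))"
    using ks lnX lnX0 by (intro exp_mono mult_mono) auto
  also have "(4 * real K * real n powr (1 / Dr)) * (2 * ln (real n)) = ((8 * real K / ln 2) * real n powr (1 / Dr) * ln (real n)) * ln 2"
    by (simp add: field_simps)
  also have "exp \<dots> = 2 powr ((8 * real K / ln 2) * real n powr (1 / Dr) * ln (real n))"
    by (simp add: powr_def mult.commute)
  finally show ?thesis .
qed

lemma varpi_ge1:
  assumes om: "2 \<le> omega m"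
  shows "1 \<le> varpi m"
proof -
  define PF where "PF = prime_factors m"
  have fin: "finite PF" unfolding PF_def by simp
  have ne: "PF \<noteq> {}" using om unfolding omega_def PF_def by auto
  define M where "M = Max PF"
  have MP: "M \<in> PF" unfolding M_def using fin ne by simp
  have sub: "PF \<subseteq> {2..M}"
  proof
    fix p assume p: "p \<in> PF"
    have "2 \<le> p" using p unfolding PF_def by (simp add: in_prime_factors_iff prime_ge_2_nat)
    moreover have "p \<le> M" unfolding M_def using fin p by simp
    ultimately show "p \<in> {2..M}" by simp
  qed
  have "card PF \<le> card {2..M}" using sub by (intro card_mono) auto
  then have "omega m \<le> M - 1" unfolding omega_def PF_def by simp
  then have "M \<ge> omega m" by simp
  then have "M \<in> {p \<in> prime_factors m. p \<ge> omega m}" using MP PF_def by simp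
  moreover have "finite {p \<in> prime_factors m. p \<ge> omega m}" by simp
  ultimately have "card {p \<in> prime_factors m. p \<ge> omega m} \<noteq> 0" by (metis card_0_eq empty_iff)
  then show ?thesis unfolding varpi_def by linarith
qed

lemma varpi_le: "varpi m \<le> omega m"
  unfolding varpi_def omega_def by (intro card_mono) auto

lemma nB_lemma:
  fixes s n E L w :: nat
  assumes s: "2 \<le> s" and w: "1 \<le> w" and E: "E = w * L" and sE: "2 ^ E * n \<le> s ^ E"
  shows "n \<le> (s ^ w - 1) ^ L"
proof -
  define a where "a = s ^ w"
  have a2: "2 \<le> a"
  proof -
    have "s ^ 1 \<le> s ^ w" using s w by (intro power_increasing) auto
    then show ?thesis using s unfolding a_def by simp
  qed
  have "2 ^ L * n \<le> 2 ^ E * n" using E w by (intro mult_le_mono power_increasing) auto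
  also have "\<dots> \<le> s ^ E" by (rule sE)
  also have "\<dots> = a ^ L" unfolding a_def E by (simp add: power_mult)
  also have "\<dots> \<le> (2 * (a - 1)) ^ L" using a2 by (intro power_mono) auto
  also have "\<dots> = 2 ^ L * (a - 1) ^ L" by (simp add: power_mult_distrib)
  finally show ?thesis unfolding a_def by simp
qed

theorem proposition4p3:
  fixes h m :: nat
  assumes "h \<ge> 3" and "m \<ge> 1" and "omega m \<ge> 2"
  shows "\<exists>c > (0::real). \<exists>N::nat. \<forall>n \<ge> N. \<exists>C.
           CC_circuit h m n C \<and> computes_AND m n C \<and>
           real (circ_size C) \<le> 2 powr (c * (real n powr
              (1 / (real ((omega m - 1) * (h - 2)) + real (varpi m) - 1))) * ln (real n))"
proof -
  define L where "L = h - 1"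
  define w where "w = omega m - 1"
  define E where "E = w * L"
  define Dr where "Dr = real ((omega m - 1) * (h - 2)) + real (varpi m) - 1"
  define K where "K = 1 + omega m + L + (2 * omega m * m + 2 * omega m + 5) * L"
  have w1: "1 \<le> w" unfolding w_def using assms by simp
  have L2: "2 \<le> L" unfolding L_def using assms by simp
  have E1: "1 \<le> E" unfolding E_def using w1 L2 by (metis le_trans mult_le_mono one_le_numeral mult_1)
  have hL: "Suc L = h" unfolding L_def using assms by simp
  have vp: "1 \<le> varpi m" "varpi m \<le> omega m" using varpi_ge1[OF assms(3)] varpi_le by auto
  have Dr0: "0 < Dr"
  proof -
    have a: "1 \<le> omega m - 1" "1 \<le> h - 2" using assms by auto
    have "1 * 1 \<le> (omega m - 1) * (h - 2)" by (rule mult_le_mono[OF a])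
    then have "1 \<le> (omega m - 1) * (h - 2)" by simp
    then show ?thesis unfolding Dr_def using vp by linarith
  qed
  have DrE: "Dr \<le> real E"
  proof -
    have hh: "h - 1 = (h - 2) + 1" using assms by simp
    have "E = (omega m - 1) * (h - 2) + (omega m - 1)"
      unfolding E_def w_def L_def hh by (simp add: algebra_simps)
    then have "real E = real ((omega m - 1) * (h - 2)) + real (omega m - 1)" by simp
    also have "real (omega m - 1) = real (omega m) - 1" using assms by (simp add: of_nat_diff)
    finally show ?thesis unfolding Dr_def using vp by linarith
  qed
  have K1: "1 \<le> K" unfolding K_def by simp
  define c where "c = 8 * real K / ln 2"
  have c0: "c > 0" unfolding c_def using K1 by simp
  have main: "\<exists>C. CC_circuit h m n C \<and> computes_AND m n C \<and>
           real (circ_size C) \<le> 2 powr (c * (real n powr (1 / Dr)) * ln (real n))" if n: "4 * m \<le> n" for n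
  proof -
    have n1: "1 \<le> n" using n assms by simp
    have rn1: "1 \<le> real n" using n1 by simp
    define y where "y = real n powr (1 / real E)"
    have y1: "1 \<le> y" unfolding y_def using rn1 by (intro ge_one_powr_ge_zero) auto
    define s where "s = 2 * nat \<lceil>y\<rceil>"
    have cy: "y \<le> real (nat \<lceil>y\<rceil>)" "real (nat \<lceil>y\<rceil>) \<le> y + 1" using y1 by linarith+
    have rs: "real s = 2 * real (nat \<lceil>y\<rceil>)" unfolding s_def by simp
    have s2y: "2 * y \<le> real s" "real s \<le> 4 * y" using rs cy y1 by linarith+
    have s2: "2 \<le> s" using s2y y1 by linarith
    have yE: "y ^ E = real n"
    proof -
      have "y ^ E = y powr real E" using y1 by (simp add: powr_realpow)
      also have "\<dots> = real n powr (1 / real E * real E)" unfolding y_def by (simp add: powr_powr)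
      also have "\<dots> = real n" using E1 rn1 by simp
      finally show ?thesis .
    qed
    have sE: "2 ^ E * n \<le> s ^ E"
    proof -
      have "real (2 ^ E * n) = (2 * y) ^ E" using yE by (simp add: power_mult_distrib)
      also have "\<dots> \<le> real s ^ E" using s2y y1 by (intro power_mono) auto
      finally show ?thesis by (simp only: of_nat_le_iff of_nat_power[symmetric])
    qed
    have nB: "n \<le> (s ^ (omega m - 1) - 1) ^ L"
      using nB_lemma[OF s2 w1 E_def sE] unfolding w_def .
    obtain C where C: "CC_circuit (Suc L) m n C" "computes_AND m n C"
        "circ_size C \<le> (m * s) ^ (K * s)"
      using main_nat[OF assms(2,3) n1 s2 nB] unfolding K_def by blast
    have yn: "y \<le> real n"
    proof -
      have "y \<le> real n powr 1" unfolding y_def using E1 rn1 by (intro powr_mono) auto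
      then show ?thesis using rn1 by simp
    qed
    have Xn: "real (m * s) \<le> real n ^ 2"
    proof -
      have "real (m * s) = real m * real s" by simp
      also have "\<dots> \<le> real m * (4 * real n)" using s2y yn by (intro mult_left_mono) auto
      also have "\<dots> = (4 * real m) * real n" by simp
      also have "\<dots> \<le> real n * real n" using n rn1 by (intro mult_right_mono) auto
      finally show ?thesis by (simp add: power2_eq_square)
    qed
    have X1: "1 \<le> m * s" using assms(2) s2 by (metis le_trans mult_le_mono one_le_numeral mult_1)
    have yD: "y \<le> real n powr (1 / Dr)"
      unfolding y_def using rn1 Dr0 DrE E1 by (intro powr_mono) (auto simp: frac_le)
    have "real (circ_size C) \<le> real ((m * s) ^ (K * s))" using C(3) by (simp only: of_nat_le_iff)
    also have "\<dots> \<le> 2 powr ((8 * real K / ln 2) * real n powr (1 / Dr) * ln (real n))"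
      by (rule real_bound[OF X1 Xn s2y(2) yD n1])
    finally show ?thesis using C hL unfolding c_def by auto
  qed
  show ?thesis
    using c0 main unfolding Dr_def by blast
qed

end
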